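(* Let $G$ be a finite group with $s$ conjugacy classes, let $r\ge 2$ be a prime, and suppose exactly $d$ of the conjugacy classes of $G$ are not $r$-th powers, labeled so that $\mathcal{C}_1,\dots,\mathcal{C}_d$ are those not consisting of $r$-th powers and $\mathcal{C}_{d+1},\dots,\mathcal{C}_s$ are the rest. Let $g\in G\wr S_n$ have type $T(g)=(T(g)_{ij})_{s\times n}$. Then $g$ is an $r$-th power in $G\wr S_n$ if and only if $r\mid T(g)_{ij}$ whenever $r\mid j$ or $1\le i\le d$.
   Context: $G\wr S_n$ is the set of pairs $(f,\pi)$ with $f:\{1,\dots,n\}\to G$ and $\pi\in S_n$, with product $(f,\pi)(f',\pi')=(ff'_\pi,\pi\pi')$, $f'_\pi(i)=f'(\pi^{-1}(i))$, pointwise product of functions. For $(f,\pi)$ and a cycle $(j,\pi(j),\dots,\pi^t(j))$ of $\pi$, its cycle product is $f(j)f(\pi^{-1}(j))\cdots f(\pi^{-t}(j))$; its conjugacy class is independent of the starting point. The type $T(g)$ of $g=(f,\pi)$ is the $s\times n$ matrix whose $(i,k)$ entry is the number of $k$-cycles of $\pi$ whose cycle product lies in $\mathcal{C}_i$. A conjugacy class $\mathcal{C}$ of $G$ is an $r$-th power if $\mathcal{C}\subseteq\{x^r:x\in G\}$; an element $g$ of $G\wr S_n$ is an $r$-th power if $g=h^r$ for some $h\in G\wr S_n$. *)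

theory Defs
  imports "HOL-Algebra.Group" "HOL-Combinatorics.Permutations" "HOL-Computational_Algebra.Primes"
begin

definition conj_class :: "('a, 'b) monoid_scheme \<Rightarrow> 'a \<Rightarrow> 'a set" where
  "conj_class G x = {inv\<^bsub>G\<^esub> y \<otimes>\<^bsub>G\<^esub> x \<otimes>\<^bsub>G\<^esub> y | y. y \<in> carrier G}"

definition conj_classes :: "('a, 'b) monoid_scheme \<Rightarrow> 'a set set" where
  "conj_classes G = conj_class G ` carrier G"

definition class_is_rth_power :: "('a, 'b) monoid_scheme \<Rightarrow> nat \<Rightarrow> 'a set \<Rightarrow> bool" where
  "class_is_rth_power G r C \<longleftrightarrow> C \<subseteq> {x [^]\<^bsub>G\<^esub> r | x. x \<in> carrier G}"

text \<open>Wreath product G wr S_n: pairs (f, pi) with f : {1..n} -> G (extended by 1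
  outside {1..n}) and pi a permutation of {1..n} (identity outside).\<close>
definition wr_carrier :: "('a, 'b) monoid_scheme \<Rightarrow> nat \<Rightarrow> ((nat \<Rightarrow> 'a) \<times> (nat \<Rightarrow> nat)) set" where
  "wr_carrier G n = {(f, p). p permutes {1..n} \<and> (\<forall>i\<in>{1..n}. f i \<in> carrier G)
                        \<and> (\<forall>i. i \<notin> {1..n} \<longrightarrow> f i = \<one>\<^bsub>G\<^esub>)}"

definition wr_mult :: "('a, 'b) monoid_scheme \<Rightarrow> ((nat \<Rightarrow> 'a) \<times> (nat \<Rightarrow> nat))
    \<Rightarrow> ((nat \<Rightarrow> 'a) \<times> (nat \<Rightarrow> nat)) \<Rightarrow> ((nat \<Rightarrow> 'a) \<times> (nat \<Rightarrow> nat))" where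
  "wr_mult G x y = (\<lambda>i. fst x i \<otimes>\<^bsub>G\<^esub> fst y (inv_into UNIV (snd x) i), snd x \<circ> snd y)"

definition wr_one :: "('a, 'b) monoid_scheme \<Rightarrow> ((nat \<Rightarrow> 'a) \<times> (nat \<Rightarrow> nat))" where
  "wr_one G = (\<lambda>_. \<one>\<^bsub>G\<^esub>, id)"

fun wr_pow :: "('a, 'b) monoid_scheme \<Rightarrow> ((nat \<Rightarrow> 'a) \<times> (nat \<Rightarrow> nat)) \<Rightarrow> nat
    \<Rightarrow> ((nat \<Rightarrow> 'a) \<times> (nat \<Rightarrow> nat))" where
  "wr_pow G x 0 = wr_one G"
| "wr_pow G x (Suc m) = wr_mult G (wr_pow G x m) x"

definition wr_is_rth_power :: "('a, 'b) monoid_scheme \<Rightarrow> nat \<Rightarrow> nat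
    \<Rightarrow> ((nat \<Rightarrow> 'a) \<times> (nat \<Rightarrow> nat)) \<Rightarrow> bool" where
  "wr_is_rth_power G n r g \<longleftrightarrow> (\<exists>h \<in> wr_carrier G n. wr_pow G h r = g)"

fun cycle_prod :: "('a, 'b) monoid_scheme \<Rightarrow> (nat \<Rightarrow> 'a) \<Rightarrow> (nat \<Rightarrow> nat) \<Rightarrow> nat \<Rightarrow> nat \<Rightarrow> 'a" where
  "cycle_prod G f p j 0 = \<one>\<^bsub>G\<^esub>"
| "cycle_prod G f p j (Suc m) = cycle_prod G f p j m \<otimes>\<^bsub>G\<^esub> f ((inv_into UNIV p ^^ m) j)"

definition cycle_of :: "(nat \<Rightarrow> nat) \<Rightarrow> nat \<Rightarrow> nat set" where
  "cycle_of p j = {(p ^^ m) j | m. True}"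

text \<open>Type entry T(g)_{C,k}: number of k-cycles of pi whose cycle product lies in C.\<close>
definition wr_type :: "('a, 'b) monoid_scheme \<Rightarrow> nat \<Rightarrow> ((nat \<Rightarrow> 'a) \<times> (nat \<Rightarrow> nat))
    \<Rightarrow> 'a set \<Rightarrow> nat \<Rightarrow> nat" where
  "wr_type G n g C k = card {Z. \<exists>j\<in>{1..n}. Z = cycle_of (snd g) j \<and> card Z = k
                              \<and> cycle_prod G (fst g) (snd g) j k \<in> C}"

end

theory Submission
  imports Defs "HOL-Combinatorics.Cycles"
begin


lemma fix_pow: "(h ^^ k) j = j \<Longrightarrow> (h ^^ (k * m)) j = j"
  by (induction m) (simp_all add: funpow_add)

lemma inv_pow_fix_iff:
  assumes "bij p" shows "(inv_into UNIV p ^^ m) j = j \<longleftrightarrow> (p ^^ m) j = j"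
proof
  assume "(inv_into UNIV p ^^ m) j = j"
  then have "(p ^^ m) ((inv_into UNIV p ^^ m) j) = (p ^^ m) j" by simp
  then show "(p ^^ m) j = j" using fn_o_inv_fn_is_id[OF assms, of m] by (metis comp_apply)
next
  assume "(p ^^ m) j = j"
  then have "(inv_into UNIV p ^^ m) ((p ^^ m) j) = (inv_into UNIV p ^^ m) j" by simp
  then show "(inv_into UNIV p ^^ m) j = j" using inv_fn_o_fn_is_id[OF assms, of m] by (metis comp_apply)
qed

lemma fwd_as_inv:
  assumes "bij h" "(h ^^ L) j = j" "L > 0"
  shows "(h ^^ m) j = (inv_into UNIV h ^^ (L * m - m)) j"
proof -
  have L: "(inv_into UNIV h ^^ (L * m)) j = j" using fix_pow[OF assms(2)] inv_pow_fix_iff[OF assms(1)] by blast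
  have le: "m \<le> L * m" using assms(3) by simp
  {
    have "(inv_into UNIV h ^^ (L * m)) j = (inv_into UNIV h ^^ m) ((inv_into UNIV h ^^ (L * m - m)) j)"
      using le by (metis funpow_add comp_apply le_add_diff_inverse)
    then have "(h ^^ m) j = (h ^^ m) ((inv_into UNIV h ^^ m) ((inv_into UNIV h ^^ (L * m - m)) j))" using L by simp
    also have "\<dots> = (inv_into UNIV h ^^ (L * m - m)) j" using fn_o_inv_fn_is_id[OF assms(1), of m] by (metis comp_apply)
    finally have ?thesis . }
  then show ?thesis by blast
qed

context
  fixes p :: "nat \<Rightarrow> nat" and S :: "nat set"
  assumes pS: "p permutes S" and fS: "finite S"
begin

lemma pp_perm: "permutation p" unfolding permutation_permutes using pS fS by blast
lemma pp_bij: "bij p" by (rule permutes_bij[OF pS])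
lemma pp_inv_bij: "bij (inv_into UNIV p)" by (rule permutes_bij[OF permutes_inv[OF pS]])

lemma cycle_of_range: "cycle_of p j = range (\<lambda>i. (p ^^ i) j)"
  unfolding cycle_of_def by auto

lemma card_cycle_of: "card (cycle_of p j) = least_power p j"
proof -
  have "distinct (support p j)" using cycle_of_permutation[OF pp_perm] by simp
  then have "card (set (support p j)) = length (support p j)" by (rule distinct_card)
  moreover have "cycle_of p j = set (support p j)" using support_set[OF pp_perm] cycle_of_range by simp
  moreover have "length (support p j) = least_power p j" by simp
  ultimately show ?thesis by simp
qed

lemma card_cycle_pos: "card (cycle_of p j) > 0"
  using card_cycle_of least_power_of_permutation(2)[OF pp_perm] by simp

lemma cycle_fix_iff: "(p ^^ m) j = j \<longleftrightarrow> card (cycle_of p j) dvd m"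
  using card_cycle_of least_power_dvd[OF pp_perm] by simp

lemma cycle_inv_fix_iff: "(inv_into UNIV p ^^ m) j = j \<longleftrightarrow> card (cycle_of p j) dvd m"
  using cycle_fix_iff inv_pow_fix_iff[OF pp_bij] by simp

lemma cycle_period: "(p ^^ card (cycle_of p j)) j = j"
  using cycle_fix_iff by simp

lemma cycle_inv_period: "(inv_into UNIV p ^^ card (cycle_of p j)) j = j"
  using cycle_inv_fix_iff by simp

lemma self_in_cycle: "j \<in> cycle_of p j"
  unfolding cycle_of_def by (auto intro: exI[of _ 0])

lemma cycle_of_inv: "x \<in> cycle_of p j \<longleftrightarrow> (\<exists>t. x = (inv_into UNIV p ^^ t) j)"
proof
  assume "x \<in> cycle_of p j"
  then obtain m where "x = (p ^^ m) j" unfolding cycle_of_def by auto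
  then show "\<exists>t. x = (inv_into UNIV p ^^ t) j" using fwd_as_inv[OF pp_bij cycle_period card_cycle_pos] by blast
next
  assume "\<exists>t. x = (inv_into UNIV p ^^ t) j"
  then obtain t where t: "x = (inv_into UNIV p ^^ t) j" by auto
  have "inv_into UNIV (inv_into UNIV p) = p" using pp_bij by (simp add: inv_inv_eq)
  moreover have "(inv_into UNIV p ^^ card (cycle_of p j)) j = j" by (rule cycle_inv_period)
  ultimately have "x = (p ^^ (card (cycle_of p j) * t - t)) j"
    using fwd_as_inv[OF pp_inv_bij, of "card (cycle_of p j)" j t] t card_cycle_pos by simp
  then show "x \<in> cycle_of p j" unfolding cycle_of_def by auto
qed

lemma cycle_of_inv_bounded: "x \<in> cycle_of p j \<longleftrightarrow> (\<exists>t < card (cycle_of p j). x = (inv_into UNIV p ^^ t) j)"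
proof
  assume "x \<in> cycle_of p j"
  then obtain t where t: "x = (inv_into UNIV p ^^ t) j" using cycle_of_inv by auto
  have "(inv_into UNIV p ^^ (t mod card (cycle_of p j))) j = x"
    using t funpow_mod_eq[OF cycle_inv_period] by simp
  then show "\<exists>t < card (cycle_of p j). x = (inv_into UNIV p ^^ t) j"
    using card_cycle_pos by (metis mod_less_divisor)
qed (auto simp: cycle_of_inv)

lemma cycle_pow_in:
  assumes "x \<in> cycle_of p j" shows "(p ^^ m) x \<in> cycle_of p j"
proof -
  obtain a where "x = (p ^^ a) j" using assms unfolding cycle_of_def by auto
  then have "(p ^^ m) x = (p ^^ (m + a)) j" by (simp add: funpow_add)
  then show ?thesis unfolding cycle_of_def by blast
qed

lemma cycle_invpow_in:
  assumes "x \<in> cycle_of p j" shows "(inv_into UNIV p ^^ m) x \<in> cycle_of p j"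
proof -
  obtain a where "x = (inv_into UNIV p ^^ a) j" using assms cycle_of_inv by auto
  then have "(inv_into UNIV p ^^ m) x = (inv_into UNIV p ^^ (m + a)) j" by (simp add: funpow_add)
  then show ?thesis using cycle_of_inv by blast
qed

lemma cycle_in_cycle:
  assumes "x \<in> cycle_of p j" shows "j \<in> cycle_of p x"
proof -
  obtain a where a: "x = (p ^^ a) j" using assms unfolding cycle_of_def by auto
  have "(inv_into UNIV p ^^ a) x = j" using a inv_fn_o_fn_is_id[OF pp_bij, of a]
    by (metis comp_apply)
  then show ?thesis using cycle_of_inv by blast
qed

lemma cycle_of_eq: "x \<in> cycle_of p j \<Longrightarrow> cycle_of p x = cycle_of p j"
proof
  assume x: "x \<in> cycle_of p j"
  show "cycle_of p x \<subseteq> cycle_of p j"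
  proof
    fix y assume "y \<in> cycle_of p x"
    then obtain m where "y = (p ^^ m) x" unfolding cycle_of_def by auto
    then show "y \<in> cycle_of p j" using cycle_pow_in[OF x] by simp
  qed
  have j: "j \<in> cycle_of p x" using cycle_in_cycle[OF x] .
  show "cycle_of p j \<subseteq> cycle_of p x"
  proof
    fix y assume "y \<in> cycle_of p j"
    then obtain m where "y = (p ^^ m) j" unfolding cycle_of_def by auto
    then show "y \<in> cycle_of p x" using cycle_pow_in[OF j] by simp
  qed
qed

lemma cycle_disj: "x \<in> cycle_of p j \<Longrightarrow> x \<in> cycle_of p j' \<Longrightarrow> cycle_of p j = cycle_of p j'"
proof -
  assume "x \<in> cycle_of p j" "x \<in> cycle_of p j'"
  then have "cycle_of p x = cycle_of p j" "cycle_of p x = cycle_of p j'" using cycle_of_eq by blast+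
  then show ?thesis by simp
qed

lemma cycle_p_in: "x \<in> cycle_of p j \<Longrightarrow> p x \<in> cycle_of p j"
  using cycle_pow_in[of x j 1] by simp

lemma cycle_invp_in: "x \<in> cycle_of p j \<Longrightarrow> inv_into UNIV p x \<in> cycle_of p j"
  using cycle_invpow_in[of x j 1] by simp

lemma cycle_subset: "j \<in> S \<Longrightarrow> cycle_of p j \<subseteq> S"
  unfolding cycle_of_def using permutes_in_image[OF permutes_funpow[OF pS]] by auto

lemma finite_cycle: "finite (cycle_of p j)"
  using card_cycle_pos[of j] by (cases "finite (cycle_of p j)") auto

lemma card_cycle_eq: "x \<in> cycle_of p j \<Longrightarrow> card (cycle_of p x) = card (cycle_of p j)"
  using cycle_of_eq by simp

end


context group
begin

lemma cancel_l1: "a \<in> carrier G \<Longrightarrow> z \<in> carrier G \<Longrightarrow> inv a \<otimes> (a \<otimes> z) = z"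
  by (simp add: m_assoc[symmetric])
lemma cancel_l2: "a \<in> carrier G \<Longrightarrow> z \<in> carrier G \<Longrightarrow> a \<otimes> (inv a \<otimes> z) = z"
  by (simp add: m_assoc[symmetric])

lemma cp_closed: assumes "\<And>i. f i \<in> carrier G" shows "cycle_prod G f p j m \<in> carrier G"
  using assms by (induction m) auto

lemma cp_add:
  assumes f: "\<And>i. f i \<in> carrier G"
  shows "cycle_prod G f p j (a + b) = cycle_prod G f p j a \<otimes> cycle_prod G f p ((inv_into UNIV p ^^ a) j) b"
proof (induction b)
  case 0 show ?case using cp_closed[OF f] by simp
next
  case (Suc b)
  have e: "(inv_into UNIV p ^^ (a + b)) j = (inv_into UNIV p ^^ b) ((inv_into UNIV p ^^ a) j)"
    by (metis add.commute comp_apply funpow_add)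
  show ?case using Suc e by (simp add: m_assoc cp_closed f)
qed

lemma cp_pow:
  assumes f: "\<And>i. f i \<in> carrier G" and k: "(inv_into UNIV p ^^ k) j = j"
  shows "cycle_prod G f p j (k * m) = cycle_prod G f p j k [^] m"
proof (induction m)
  case 0 show ?case by simp
next
  case (Suc m)
  have "cycle_prod G f p j (k * Suc m) = cycle_prod G f p j (k * m + k)" by (simp add: add.commute)
  also have "\<dots> = cycle_prod G f p j (k*m) \<otimes> cycle_prod G f p j k"
    using cp_add[OF f, where a="k*m" and b=k] fix_pow[OF k, of m] by simp
  also have "\<dots> = cycle_prod G f p j k [^] Suc m" using Suc by simp
  finally show ?case .
qed

lemma cp_rot:
  assumes f: "\<And>i. f i \<in> carrier G" and k: "(inv_into UNIV p ^^ k) j = j"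
  shows "cycle_prod G f p ((inv_into UNIV p ^^ s) j) k
       = inv (cycle_prod G f p j s) \<otimes> cycle_prod G f p j k \<otimes> cycle_prod G f p j s"
proof -
  let ?a = "cycle_prod G f p j s"
  let ?X = "cycle_prod G f p ((inv_into UNIV p ^^ s) j) k"
  let ?c = "cycle_prod G f p j k"
  have "cycle_prod G f p j (s + k) = ?a \<otimes> ?X" by (rule cp_add[OF f])
  moreover have "cycle_prod G f p j (k + s) = ?c \<otimes> ?a" using cp_add[OF f, where a=k and b=s] k by simp
  ultimately have eq: "?a \<otimes> ?X = ?c \<otimes> ?a" by (simp add: add.commute)
  have cl: "?a \<in> carrier G" "?X \<in> carrier G" "?c \<in> carrier G" using cp_closed f by auto
  then have "?X = inv ?a \<otimes> (?a \<otimes> ?X)" by (simp add: cancel_l1)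
  also have "\<dots> = inv ?a \<otimes> ?c \<otimes> ?a" using eq cl by (simp add: m_assoc)
  finally show ?thesis .
qed

lemma cp_twist:
  assumes B: "\<And>i. i \<in> B \<Longrightarrow> inv_into UNIV p i \<in> B"
    and fe: "\<And>i. i \<in> B \<Longrightarrow> f i = \<alpha> i \<otimes> f0 i \<otimes> inv (\<alpha> (inv_into UNIV p i))"
    and a: "\<And>i. \<alpha> i \<in> carrier G" and f0: "\<And>i. f0 i \<in> carrier G" and j: "j \<in> B"
  shows "cycle_prod G f p j m = \<alpha> j \<otimes> cycle_prod G f0 p j m \<otimes> inv (\<alpha> ((inv_into UNIV p ^^ m) j))"
proof (induction m)
  case 0 show ?case using a by (simp add: m_assoc)
next
  case (Suc m)
  let ?x = "(inv_into UNIV p ^^ m) j"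
  have xB: "(inv_into UNIV p ^^ n) j \<in> B" for n by (induction n) (auto simp: j B)
  have cl: "cycle_prod G f0 p j m \<in> carrier G" using cp_closed f0 by auto
  have "cycle_prod G f p j (Suc m) = cycle_prod G f p j m \<otimes> f ?x" by simp
  also have "\<dots> = (\<alpha> j \<otimes> cycle_prod G f0 p j m \<otimes> inv (\<alpha> ?x)) \<otimes> (\<alpha> ?x \<otimes> f0 ?x \<otimes> inv (\<alpha> (inv_into UNIV p ?x)))"
    using Suc fe xB by simp
  also have "\<dots> = \<alpha> j \<otimes> (cycle_prod G f0 p j m \<otimes> f0 ?x) \<otimes> inv (\<alpha> (inv_into UNIV p ?x))"
    using cl a f0 by (simp add: m_assoc cancel_l1)
  also have "\<dots> = \<alpha> j \<otimes> cycle_prod G f0 p j (Suc m) \<otimes> inv (\<alpha> ((inv_into UNIV p ^^ Suc m) j))"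
    by simp
  finally show ?case .
qed

lemma cp_local:
  assumes B: "\<And>i. i \<in> B \<Longrightarrow> inv_into UNIV p i = inv_into UNIV p' i \<and> inv_into UNIV p i \<in> B"
    and fe: "\<And>i. i \<in> B \<Longrightarrow> f i = f' i" and j: "j \<in> B"
  shows "cycle_prod G f p j m = cycle_prod G f' p' j m"
proof -
  have aux: "(inv_into UNIV p ^^ n) j \<in> B \<and> (inv_into UNIV p ^^ n) j = (inv_into UNIV p' ^^ n) j" for n
  proof (induction n)
    case 0 show ?case using j by simp
  next
    case (Suc n) then show ?case using B[of "(inv_into UNIV p ^^ n) j"] by auto
  qed
  show ?thesis
  proof (induction m)
    case (Suc m)
    have "f ((inv_into UNIV p ^^ m) j) = f' ((inv_into UNIV p' ^^ m) j)" using aux[of m] fe by metis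
    then show ?case using Suc by simp
  qed simp
qed

lemma wr_pow_formula:
  assumes "bij p"
  shows "wr_pow G (f, p) m = (\<lambda>i. cycle_prod G f p i m, p ^^ m)"
proof (induction m)
  case 0 show ?case by (simp add: wr_one_def id_def)
next
  case (Suc m)
  have i: "inv_into UNIV (p ^^ m) = inv_into UNIV p ^^ m" using inv_fn[OF assms] by simp
  have s: "p ^^ Suc m = p ^^ m \<circ> p" by (rule funpow_Suc_right)
  show ?case using Suc by (simp only: wr_pow.simps wr_mult_def i s fst_conv snd_conv cycle_prod.simps)
qed

lemma cp_comp:
  assumes f: "\<And>i. f i \<in> carrier G" and b: "bij s"
  shows "cycle_prod G (\<lambda>i. cycle_prod G f s i r) (s ^^ r) j k = cycle_prod G f s j (r * k)"
proof (induction k)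
  case 0 show ?case by simp
next
  case (Suc k)
  have e: "(inv_into UNIV (s ^^ r) ^^ k) j = (inv_into UNIV s ^^ (r * k)) j"
    using inv_fn[OF b] funpow_mult by metis
  have "cycle_prod G (\<lambda>i. cycle_prod G f s i r) (s ^^ r) j (Suc k)
      = cycle_prod G f s j (r * k) \<otimes> cycle_prod G f s ((inv_into UNIV s ^^ (r * k)) j) r"
    using Suc e by simp
  also have "\<dots> = cycle_prod G f s j (r * k + r)" using cp_add[OF f] by simp
  finally show ?case by (simp add: add.commute)
qed

lemma conj_class_carrier: "x \<in> carrier G \<Longrightarrow> conj_class G x \<subseteq> carrier G"
  unfolding conj_class_def by auto

lemma conj_class_self: "x \<in> carrier G \<Longrightarrow> x \<in> conj_class G x"
  unfolding conj_class_def by (auto intro!: exI[of _ \<one>])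

lemma conj_class_conj:
  assumes "x \<in> carrier G" "y \<in> conj_class G x" "c \<in> carrier G"
  shows "inv c \<otimes> y \<otimes> c \<in> conj_class G x"
proof -
  obtain d where d: "d \<in> carrier G" "y = inv d \<otimes> x \<otimes> d" using assms unfolding conj_class_def by auto
  have "inv c \<otimes> y \<otimes> c = inv (d \<otimes> c) \<otimes> x \<otimes> (d \<otimes> c)" using d assms by (simp add: m_assoc inv_mult_group)
  then show ?thesis unfolding conj_class_def using d assms by auto
qed

lemma conj_class_eq:
  assumes x: "x \<in> carrier G" and y: "y \<in> conj_class G x"
  shows "conj_class G y = conj_class G x"
proof -
  obtain d where d: "d \<in> carrier G" "y = inv d \<otimes> x \<otimes> d" using y unfolding conj_class_def by auto
  have yc: "y \<in> carrier G" using d x by simp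
  have xy: "x = inv (inv d) \<otimes> y \<otimes> inv d" using d x by (simp add: m_assoc cancel_l2)
  have "x \<in> conj_class G y" using xy d yc unfolding conj_class_def by blast
  show ?thesis
  proof
    show "conj_class G y \<subseteq> conj_class G x"
      using conj_class_conj[OF x y] unfolding conj_class_def[of G y] by auto
    show "conj_class G x \<subseteq> conj_class G y"
      using conj_class_conj[OF yc \<open>x \<in> conj_class G y\<close>] unfolding conj_class_def[of G x] by auto
  qed
qed

lemma classes_carrier: "C \<in> conj_classes G \<Longrightarrow> C \<subseteq> carrier G"
  unfolding conj_classes_def using conj_class_carrier by auto

lemma classes_eq:
  assumes "C1 \<in> conj_classes G" "C2 \<in> conj_classes G" "z \<in> C1" "z \<in> C2"
  shows "C1 = C2"
proof -
  obtain x1 x2 where "x1 \<in> carrier G" "x2 \<in> carrier G" "C1 = conj_class G x1" "C2 = conj_class G x2"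
    using assms unfolding conj_classes_def by auto
  then show ?thesis using conj_class_eq assms by metis
qed

lemma class_closed:
  assumes "C \<in> conj_classes G" "y \<in> C" "c \<in> carrier G"
  shows "inv c \<otimes> y \<otimes> c \<in> C"
  using assms conj_class_conj unfolding conj_classes_def by auto

lemma class_closed':
  assumes "C \<in> conj_classes G" "y \<in> C" "c \<in> carrier G"
  shows "c \<otimes> y \<otimes> inv c \<in> C"
  using class_closed[OF assms(1,2), of "inv c"] assms(3) by simp

lemma class_conj_ex:
  assumes C: "C \<in> conj_classes G" and u: "u \<in> C" and v: "v \<in> C"
  shows "\<exists>c\<in>carrier G. u = c \<otimes> v \<otimes> inv c"
proof -
  have vc: "v \<in> carrier G" using classes_carrier C v by auto
  have "C = conj_class G v" using classes_eq[OF C _ v] conj_class_self[OF vc] vc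
    unfolding conj_classes_def by auto
  then obtain d where d: "d \<in> carrier G" "u = inv d \<otimes> v \<otimes> d" using u unfolding conj_class_def by auto
  then show ?thesis by (intro bexI[of _ "inv d"]) auto
qed

lemma pow_conj:
  assumes c: "c \<in> carrier G" and w: "w \<in> carrier G"
  shows "inv c \<otimes> (w [^] (r::nat)) \<otimes> c = (inv c \<otimes> w \<otimes> c) [^] r"
proof (induction r)
  case 0 show ?case using c by simp
next
  case (Suc r)
  have "inv c \<otimes> (w [^] Suc r) \<otimes> c = (inv c \<otimes> (w [^] r) \<otimes> c) \<otimes> (inv c \<otimes> w \<otimes> c)"
    using c w by (simp add: m_assoc cancel_l2)
  then show ?case using Suc by simp
qed

lemma class_rth:
  assumes C: "C \<in> conj_classes G" and z: "z \<in> C" and w: "w \<in> carrier G"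
    and zw: "z = w [^] (r::nat)"
  shows "class_is_rth_power G r C"
  unfolding class_is_rth_power_def
proof
  fix y assume y: "y \<in> C"
  obtain c where c: "c \<in> carrier G" "y = c \<otimes> z \<otimes> inv c" using class_conj_ex[OF C y z] by auto
  have "y = inv (inv c) \<otimes> (w [^] r) \<otimes> inv c" using c zw by simp
  also have "\<dots> = (inv (inv c) \<otimes> w \<otimes> inv c) [^] r" by (rule pow_conj) (use c w in auto)
  finally show "y \<in> {x [^] r |x. x \<in> carrier G}" using c w by auto
qed

end


lemma orbit_dvd:
  fixes \<tau> :: "'x \<Rightarrow> 'x"
  assumes "finite S" "\<And>x. x \<in> S \<Longrightarrow> \<tau> x \<in> S" "\<And>x. x \<in> S \<Longrightarrow> (\<tau> ^^ r) x = x"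
    "\<And>x. x \<in> S \<Longrightarrow> \<tau> x \<noteq> x" "prime r"
  shows "r dvd card S"
  using assms
proof (induction "card S" arbitrary: S rule: less_induct)
  case less
  show ?case
  proof (cases "S = {}")
    case True then show ?thesis by simp
  next
    case False
    then obtain x where x: "x \<in> S" by auto
    have r0: "r > 0" using less.prems(5) prime_gt_0_nat by blast
    define Orb where "Orb = (\<lambda>i. (\<tau> ^^ i) x) ` {0..<r}"
    have inS: "(\<tau> ^^ i) x \<in> S" for i by (induction i) (auto simp: x less.prems(2))
    have OS: "Orb \<subseteq> S" unfolding Orb_def using inS by auto
    have xr: "(\<tau> ^^ r) x = x" using less.prems(3) x by blast
    have inO: "(\<tau> ^^ i) x \<in> Orb" for i
    proof -
      have "(\<tau> ^^ i) x = (\<tau> ^^ (i mod r)) x" using funpow_mod_eq[OF xr] by simp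
      then show ?thesis unfolding Orb_def using r0 by auto
    qed
    have inj: "inj_on (\<lambda>i. (\<tau> ^^ i) x) {0..<r}"
    proof (rule inj_onI, rule ccontr)
      fix i j assume i: "i \<in> {0..<r}" and j: "j \<in> {0..<r}" and e: "(\<tau> ^^ i) x = (\<tau> ^^ j) x" and ne: "i \<noteq> j"
      have "\<exists>m. 0 < m \<and> m < r \<and> (\<tau> ^^ m) x = x"
      proof -
        { fix a b assume ab: "a < b" "b < r" "(\<tau> ^^ a) x = (\<tau> ^^ b) x"
          have "(\<tau> ^^ (r - b + a)) x = (\<tau> ^^ (r - b)) ((\<tau> ^^ a) x)" by (simp add: funpow_add)
          also have "\<dots> = (\<tau> ^^ (r - b)) ((\<tau> ^^ b) x)" using ab by simp
          also have "\<dots> = (\<tau> ^^ r) x"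
          proof -
            have e: "r - b + b = r" using ab by simp
            show ?thesis using funpow_add[of "r-b" b \<tau>] e by (metis comp_apply)
          qed
          finally have "(\<tau> ^^ (r - b + a)) x = x" using xr by simp
          then have "\<exists>m. 0 < m \<and> m < r \<and> (\<tau> ^^ m) x = x" using ab by (intro exI[of _ "r - b + a"]) auto }
        note * = this
        show ?thesis
        proof (cases "i < j")
          case True then show ?thesis using *[of i j] i j e by auto
        next
          case False then have "j < i" using ne by simp
          then show ?thesis using *[of j i] i j e by auto
        qed
      qed
      then obtain m where m: "0 < m" "m < r" "(\<tau> ^^ m) x = x" by auto
      have "\<not> r dvd m" using m by (auto dest: dvd_imp_le)
      then have "coprime r m" using prime_imp_coprime_nat[OF less.prems(5)] by blast
      then have "coprime m r" by (simp add: coprime_commute)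
      then have g1: "gcd m r = 1" by simp
      obtain u v where uv: "m * u = r * v + gcd m r" using bezout_nat[of m r] m by auto
      have "(\<tau> ^^ (m * u)) x = x" using fix_pow[OF m(3)] by simp
      moreover have "(\<tau> ^^ (m * u)) x = \<tau> x"
      proof -
        have "(\<tau> ^^ (m * u)) x = (\<tau> ^^ (1 + r * v)) x" using uv g1 by simp
        also have "\<dots> = \<tau> ((\<tau> ^^ (r * v)) x)" by (simp add: funpow_add)
        also have "\<dots> = \<tau> x" using fix_pow[OF xr] by simp
        finally show ?thesis .
      qed
      ultimately show False using less.prems(4) x by simp
    qed
    have cO: "card Orb = r" unfolding Orb_def using inj by (simp add: card_image)
    have closed: "\<tau> y \<in> S - Orb" if y: "y \<in> S - Orb" for y
    proof (rule ccontr)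
      assume "\<tau> y \<notin> S - Orb"
      then have "\<tau> y \<in> Orb" using less.prems(2) y by auto
      then obtain i where i: "\<tau> y = (\<tau> ^^ i) x" unfolding Orb_def by auto
      have "y = (\<tau> ^^ r) y" using less.prems(3) y by simp
      also have "\<dots> = (\<tau> ^^ (Suc (r - 1))) y" using r0 by simp
      also have "\<dots> = (\<tau> ^^ (r - 1)) (\<tau> y)" by (simp only: funpow_Suc_right comp_apply)
      also have "\<dots> = (\<tau> ^^ (r - 1 + i)) x" using i by (simp add: funpow_add)
      finally have "y \<in> Orb" using inO by simp
      then show False using y by simp
    qed
    have finO: "finite Orb" using OS less.prems(1) by (rule finite_subset)
    have cD: "card (S - Orb) = card S - r" using card_Diff_subset[OF finO OS] cO by simp
    have rS: "r \<le> card S" using card_mono[OF less.prems(1) OS] cO by simp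
    have lt: "card (S - Orb) < card S" using cD rS r0 by simp
    have fD: "finite (S - Orb)" using less.prems(1) by simp
    have "r dvd card (S - Orb)"
    proof (rule less.hyps[OF lt fD])
      show "\<And>y. y \<in> S - Orb \<Longrightarrow> \<tau> y \<in> S - Orb" by (rule closed)
      show "\<And>y. y \<in> S - Orb \<Longrightarrow> (\<tau> ^^ r) y = y" using less.prems(3) by blast
      show "\<And>y. y \<in> S - Orb \<Longrightarrow> \<tau> y \<noteq> y" using less.prems(4) by blast
      show "prime r" by (rule less.prems(5))
    qed
    moreover have "card S = card (S - Orb) + r" using cD rS by simp
    ultimately show ?thesis by simp
  qed
qed


context group
begin

lemma class_indep:
  assumes pS: "p permutes S" "finite S" and F: "\<And>i. F i \<in> carrier G"
    and C: "C \<in> conj_classes G" and x: "x \<in> cycle_of p j"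
    and cj: "cycle_prod G F p j (card (cycle_of p j)) \<in> C"
  shows "cycle_prod G F p x (card (cycle_of p j)) \<in> C"
proof -
  obtain t where t: "x = (inv_into UNIV p ^^ t) j" using cycle_of_inv[OF pS] x by auto
  have "cycle_prod G F p x (card (cycle_of p j))
      = inv (cycle_prod G F p j t) \<otimes> cycle_prod G F p j (card (cycle_of p j)) \<otimes> cycle_prod G F p j t"
    using cp_rot[OF F cycle_inv_period[OF pS]] t by simp
  then show ?thesis using class_closed[OF C cj] cp_closed F by simp
qed

lemma class_indep_iff:
  assumes pS: "p permutes S" "finite S" and F: "\<And>i. F i \<in> carrier G"
    and C: "C \<in> conj_classes G" and x: "x \<in> cycle_of p j"
  shows "cycle_prod G F p x (card (cycle_of p j)) \<in> C \<longleftrightarrow> cycle_prod G F p j (card (cycle_of p j)) \<in> C"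
proof
  assume "cycle_prod G F p x (card (cycle_of p j)) \<in> C"
  then have "cycle_prod G F p x (card (cycle_of p x)) \<in> C" using card_cycle_eq[OF pS x] by simp
  then have "cycle_prod G F p j (card (cycle_of p x)) \<in> C"
    using class_indep[OF pS F C cycle_in_cycle[OF pS x]] by simp
  then show "cycle_prod G F p j (card (cycle_of p j)) \<in> C" using card_cycle_eq[OF pS x] by simp
qed (rule class_indep[OF pS F C x])

lemma wr_carrier_D:
  assumes "(f, s) \<in> wr_carrier G n"
  shows "s permutes {1..n}" "\<And>i. f i \<in> carrier G" "\<And>i. i \<notin> {1..n} \<Longrightarrow> f i = \<one>"
proof -
  show "s permutes {1..n}" using assms unfolding wr_carrier_def by auto
  show "\<And>i. i \<notin> {1..n} \<Longrightarrow> f i = \<one>" using assms unfolding wr_carrier_def by auto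
  fix i show "f i \<in> carrier G" using assms unfolding wr_carrier_def by (cases "i \<in> {1..n}") auto
qed

lemma image_pow:
  fixes s :: "nat \<Rightarrow> nat" and Z :: "nat set"
  shows "((\<lambda>Z. s ` Z) ^^ m) Z = (s ^^ m) ` Z"
  by (induction m) (simp_all add: image_comp)

lemma forward:
  assumes r: "prime r" and h: "(f, s) \<in> wr_carrier G n"
    and C: "C \<in> conj_classes G" and k: "k \<in> {1..n}"
    and cond: "r dvd k \<or> \<not> class_is_rth_power G r C"
  shows "r dvd wr_type G n (wr_pow G (f, s) r) C k"
proof -
  have sP: "s permutes {1..n}" and f: "\<And>i. f i \<in> carrier G" using wr_carrier_D[OF h] by auto
  have fin: "finite {1..n::nat}" by simp
  have sb: "bij s" using permutes_bij[OF sP] .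
  define \<pi> where "\<pi> = s ^^ r"
  define F where "F = (\<lambda>i. cycle_prod G f s i r)"
  have piP: "\<pi> permutes {1..n}" unfolding \<pi>_def by (rule permutes_funpow[OF sP])
  have Fc: "\<And>i. F i \<in> carrier G" unfolding F_def using cp_closed[OF f] by simp
  have g: "wr_pow G (f, s) r = (F, \<pi>)" unfolding F_def \<pi>_def using wr_pow_formula[OF sb] by simp
  have r2: "r \<ge> 2" using r prime_ge_2_nat by blast
  have k1: "k \<ge> 1" using k by simp
  have FF: "cycle_prod G F \<pi> i m = cycle_prod G f s i (r * m)" for i m
    unfolding F_def \<pi>_def using cp_comp[OF f sb] by simp
  define S where "S = {Z. \<exists>j\<in>{1..n}. Z = cycle_of \<pi> j \<and> card Z = k \<and> cycle_prod G F \<pi> j k \<in> C}"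
  have wt: "wr_type G n (wr_pow G (f, s) r) C k = card S" unfolding wr_type_def S_def g by simp
  have commute: "s ((\<pi> ^^ m) j) = (\<pi> ^^ m) (s j)" for m j
    unfolding \<pi>_def funpow_mult by (rule funpow_swap1)
  have img: "s ` cycle_of \<pi> j = cycle_of \<pi> (s j)" for j
  proof -
    have "s ` {(\<pi> ^^ m) j | m. True} = {s ((\<pi> ^^ m) j) | m. True}" by auto
    also have "\<dots> = {(\<pi> ^^ m) (s j) | m. True}" using commute by simp
    finally show ?thesis unfolding cycle_of_def .
  qed
  have finS: "finite S"
  proof (rule finite_subset)
    show "S \<subseteq> Pow {1..n}"
    proof
      fix Z assume "Z \<in> S"
      then obtain j where "j \<in> {1..n}" "Z = cycle_of \<pi> j" unfolding S_def by auto
      then show "Z \<in> Pow {1..n}" using cycle_subset[OF piP fin] by auto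
    qed
  qed simp
  have step1: "s ` Z \<in> S" if Z: "Z \<in> S" for Z
  proof -
    obtain j where j: "j \<in> {1..n}" "Z = cycle_of \<pi> j" "card Z = k" "cycle_prod G F \<pi> j k \<in> C"
      using Z unfolding S_def by auto
    have sj: "s j \<in> {1..n}" using permutes_in_image[OF sP] j by simp
    have cZ: "card (s ` Z) = k" using j card_image[OF permutes_inj_on[OF sP]] by simp
    have "(\<pi> ^^ k) j = j" using cycle_period[OF piP fin, of j] j by simp
    then have "(s ^^ (r * k)) j = j" unfolding \<pi>_def funpow_mult by simp
    then have K: "(inv_into UNIV s ^^ (r * k)) j = j" using inv_pow_fix_iff[OF sb] by simp
    have rk: "r * k \<ge> 1" using r2 k1 by simp
    have "inv_into UNIV s ((inv_into UNIV s ^^ (r * k - 1)) j) = j"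
      using K rk by (metis Suc_diff_1 comp_apply funpow.simps(2) less_le_trans zero_less_one)
    then have sj': "(inv_into UNIV s ^^ (r * k - 1)) j = s j"
      using sb by (metis bij_inv_eq_iff)
    have "cycle_prod G F \<pi> (s j) k = cycle_prod G f s (s j) (r * k)" by (rule FF)
    also have "\<dots> = inv (cycle_prod G f s j (r * k - 1)) \<otimes> cycle_prod G f s j (r * k) \<otimes> cycle_prod G f s j (r * k - 1)"
      using cp_rot[OF f K, where s="r * k - 1"] sj' by simp
    finally have "cycle_prod G F \<pi> (s j) k \<in> C"
      using class_closed[OF C, of "cycle_prod G f s j (r * k)"] FF[of j k] j cp_closed[OF f] by simp
    then show ?thesis unfolding S_def using sj cZ img j by auto
  qed
  have step2: "((\<lambda>Z. s ` Z) ^^ r) Z = Z" if Z: "Z \<in> S" for Z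
  proof -
    obtain j where j: "Z = cycle_of \<pi> j" using Z unfolding S_def by auto
    have "\<pi> ` Z \<subseteq> Z" using cycle_p_in[OF piP fin] j by auto
    moreover have "Z \<subseteq> \<pi> ` Z"
    proof
      fix y assume y: "y \<in> Z"
      have "inv_into UNIV \<pi> y \<in> Z" using cycle_invp_in[OF piP fin] j y by auto
      moreover have "\<pi> (inv_into UNIV \<pi> y) = y" using permutes_bij[OF piP] by (metis bij_inv_eq_iff)
      ultimately show "y \<in> \<pi> ` Z" by (metis imageI)
    qed
    ultimately have "\<pi> ` Z = Z" by auto
    then show ?thesis unfolding image_pow \<pi>_def by simp
  qed
  have step3: "s ` Z \<noteq> Z" if Z: "Z \<in> S" for Z
  proof
    assume inv: "s ` Z = Z"
    obtain j where j: "j \<in> {1..n}" "Z = cycle_of \<pi> j" "card Z = k" "cycle_prod G F \<pi> j k \<in> C"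
      using Z unfolding S_def by auto
    have jZ: "j \<in> Z" using j self_in_cycle[OF piP fin] by simp
    have sm: "(s ^^ m) j \<in> Z" for m
    proof (induction m)
      case 0 then show ?case using jZ by simp
    next
      case (Suc m) then show ?case using inv by (auto simp: image_iff)
    qed
    have cyc: "cycle_of s j = Z"
    proof
      show "cycle_of s j \<subseteq> Z" unfolding cycle_of_def using sm by auto
      show "Z \<subseteq> cycle_of s j" unfolding j(2) cycle_of_def \<pi>_def funpow_mult by auto
    qed
    then have ck: "card (cycle_of s j) = k" using j by simp
    show False using cond
    proof
      assume "r dvd k"
      then obtain q where q: "k = r * q" by auto
      have q0: "q > 0" using q k1 by (cases q) auto
      have qk: "q < k" using q r2 q0 by simp
      have "(\<pi> ^^ q) j = (s ^^ k) j" unfolding \<pi>_def funpow_mult q by simp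
      also have "\<dots> = j" using cycle_period[OF sP fin, of j] ck by simp
      finally have "card (cycle_of \<pi> j) dvd q" using cycle_fix_iff[OF piP fin, where m=q and j=j] by simp
      then show False using j q0 qk by (simp add: nat_dvd_not_less)
    next
      assume nr: "\<not> class_is_rth_power G r C"
      have K: "(inv_into UNIV s ^^ k) j = j" using cycle_inv_period[OF sP fin, of j] ck by simp
      have "cycle_prod G F \<pi> j k = cycle_prod G f s j (k * r)" using FF by (simp add: mult.commute)
      also have "\<dots> = cycle_prod G f s j k [^] r" using cp_pow[OF f K] by simp
      finally have e: "cycle_prod G F \<pi> j k = cycle_prod G f s j k [^] r" .
      have "class_is_rth_power G r C" using class_rth[OF C j(4) cp_closed[OF f] e] .
      then show False using nr by simp
    qed
  qed
  have "r dvd card S"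
    by (rule orbit_dvd[OF finS step1 step2 step3 r])
  then show ?thesis using wt by simp
qed

end


context group
begin

lemma alg1:
  assumes "a \<in> carrier G" "b \<in> carrier G" "c \<in> carrier G" "x \<in> carrier G" "y \<in> carrier G"
  shows "(inv a \<otimes> c \<otimes> b) \<otimes> y \<otimes> inv (inv (a \<otimes> x) \<otimes> c \<otimes> (b \<otimes> y)) = x"
  using assms by (simp add: inv_mult_group m_assoc cancel_l1 cancel_l2)

lemma alg2:
  assumes "a \<in> carrier G" "b \<in> carrier G" "c \<in> carrier G" "x \<in> carrier G" "y \<in> carrier G"
    and e: "a \<otimes> x = c \<otimes> (b \<otimes> y) \<otimes> inv c"
  shows "x = (inv a \<otimes> c \<otimes> b) \<otimes> y \<otimes> inv c"
proof -
  have "x = inv a \<otimes> (a \<otimes> x)" using assms(1,4) by (simp add: cancel_l1)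
  also have "\<dots> = inv a \<otimes> (c \<otimes> (b \<otimes> y) \<otimes> inv c)" using e by simp
  finally show ?thesis using assms by (simp add: m_assoc)
qed

lemma idx_unique:
  assumes pS: "p permutes S" "finite S"
    and t: "t < card (cycle_of p j)" and t': "t' < card (cycle_of p j)"
    and e: "(inv_into UNIV p ^^ t) j = (inv_into UNIV p ^^ t') j"
  shows "t = t'"
proof (rule ccontr)
  assume ne: "t \<noteq> t'"
  have inj: "inj (inv_into UNIV p)" using bij_is_inj[OF pp_inv_bij[OF pS]] .
  { fix a b assume ab: "a < b" "b < card (cycle_of p j)" "(inv_into UNIV p ^^ a) j = (inv_into UNIV p ^^ b) j"
    have "(inv_into UNIV p ^^ (b - a)) j = j" using funpow_diff[OF inj, of a b j] ab by simp
    then have "card (cycle_of p j) dvd (b - a)" using cycle_inv_fix_iff[OF pS] by simp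
    then have False using ab by (simp add: nat_dvd_not_less) }
  note * = this
  show False
  proof (cases "t < t'")
    case True then show ?thesis using *[of t t'] t' e by simp
  next
    case False then have "t' < t" using ne by simp
    then show ?thesis using *[of t' t] t e by simp
  qed
qed

lemma coh_local:
  assumes pS: "p permutes S" "finite S" and F: "\<And>i. F i \<in> carrier G" and F0: "\<And>i. F0 i \<in> carrier G"
    and c: "c \<in> carrier G"
    and eq: "cycle_prod G F p j (card (cycle_of p j)) = c \<otimes> cycle_prod G F0 p j (card (cycle_of p j)) \<otimes> inv c"
  shows "\<exists>\<alpha>. (\<forall>i. \<alpha> i \<in> carrier G) \<and> (\<forall>i\<in>cycle_of p j. F i = \<alpha> i \<otimes> F0 i \<otimes> inv (\<alpha> (inv_into UNIV p i)))"
proof -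
  define k where "k = card (cycle_of p j)"
  define ip where "ip = inv_into UNIV p"
  define idx where "idx i = (LEAST t. (ip ^^ t) j = i)" for i
  define \<alpha> where "\<alpha> i = inv (cycle_prod G F p j (idx i)) \<otimes> c \<otimes> cycle_prod G F0 p j (idx i)" for i
  have k0: "k > 0" unfolding k_def using card_cycle_pos[OF pS] .
  have idx: "idx ((ip ^^ t) j) = t" if "t < k" for t
    unfolding idx_def
  proof (rule Least_equality)
    show "(ip ^^ t) j = (ip ^^ t) j" ..
    fix t' assume e: "(ip ^^ t') j = (ip ^^ t) j"
    show "t \<le> t'"
    proof (rule ccontr)
      assume "\<not> t \<le> t'"
      then have "t' < k" using that by simp
      then have "t' = t" using idx_unique[OF pS, of t' j t] e that unfolding k_def ip_def by simp
      then show False using \<open>\<not> t \<le> t'\<close> by simp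
    qed
  qed
  have ac: "\<alpha> i \<in> carrier G" for i unfolding \<alpha>_def using cp_closed F F0 c by simp
  have main: "F i = \<alpha> i \<otimes> F0 i \<otimes> inv (\<alpha> (ip i))" if i: "i \<in> cycle_of p j" for i
  proof -
    obtain t where t: "t < k" "i = (ip ^^ t) j" using i cycle_of_inv_bounded[OF pS] unfolding k_def ip_def by auto
    have it: "idx i = t" using idx t by simp
    have ipi: "ip i = (ip ^^ Suc t) j" using t by simp
    have cl: "cycle_prod G F p j t \<in> carrier G" "cycle_prod G F0 p j t \<in> carrier G" "F i \<in> carrier G" "F0 i \<in> carrier G"
      using cp_closed F F0 by auto
    show ?thesis
    proof (cases "Suc t < k")
      case True
      then have "idx (ip i) = Suc t" unfolding ipi by (rule idx)
      then have "\<alpha> (ip i) = inv (cycle_prod G F p j t \<otimes> F i) \<otimes> c \<otimes> (cycle_prod G F0 p j t \<otimes> F0 i)"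
        unfolding \<alpha>_def using t by (simp add: ip_def)
      moreover have "\<alpha> i = inv (cycle_prod G F p j t) \<otimes> c \<otimes> cycle_prod G F0 p j t"
        unfolding \<alpha>_def it ..
      ultimately show ?thesis using alg1[OF cl(1,2) c cl(3,4)] by simp
    next
      case False
      then have tk: "Suc t = k" using t by simp
      then have "ip i = j" using ipi cycle_inv_period[OF pS, of j] unfolding k_def ip_def by simp
      moreover have "idx j = 0" using idx[of 0] k0 by simp
      ultimately have a1: "\<alpha> (ip i) = c" unfolding \<alpha>_def using c by simp
      have a2: "\<alpha> i = inv (cycle_prod G F p j t) \<otimes> c \<otimes> cycle_prod G F0 p j t"
        unfolding \<alpha>_def it ..
      have e1: "cycle_prod G F p j (Suc t) = cycle_prod G F p j t \<otimes> F i" using t(2) by (simp add: ip_def)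
      have e2: "cycle_prod G F0 p j (Suc t) = cycle_prod G F0 p j t \<otimes> F0 i" using t(2) by (simp add: ip_def)
      have e3: "cycle_prod G F p j (Suc t) = c \<otimes> cycle_prod G F0 p j (Suc t) \<otimes> inv c"
        using eq tk unfolding k_def by simp
      have "cycle_prod G F p j t \<otimes> F i = c \<otimes> (cycle_prod G F0 p j t \<otimes> F0 i) \<otimes> inv c"
        using e1 e2 e3 by simp
      then show ?thesis using alg2[OF cl(1,2) c cl(3,4)] a1 a2 by simp
    qed
  qed
  show ?thesis using ac main unfolding ip_def by blast
qed

lemma coh_global:
  assumes pS: "p permutes S" "finite S" and F: "\<And>i. F i \<in> carrier G" and F0: "\<And>i. F0 i \<in> carrier G"
    and hyp: "\<And>j. j \<in> B \<Longrightarrow> \<exists>c\<in>carrier G. cycle_prod G F p j (card (cycle_of p j))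
                 = c \<otimes> cycle_prod G F0 p j (card (cycle_of p j)) \<otimes> inv c"
  shows "\<exists>\<alpha>. (\<forall>i. \<alpha> i \<in> carrier G) \<and> (\<forall>i\<in>B. F i = \<alpha> i \<otimes> F0 i \<otimes> inv (\<alpha> (inv_into UNIV p i)))"
proof -
  have "\<forall>j\<in>B. \<exists>\<alpha>. (\<forall>i. \<alpha> i \<in> carrier G) \<and> (\<forall>i\<in>cycle_of p j. F i = \<alpha> i \<otimes> F0 i \<otimes> inv (\<alpha> (inv_into UNIV p i)))"
  proof
    fix j assume "j \<in> B"
    then obtain c where c: "c \<in> carrier G" and e: "cycle_prod G F p j (card (cycle_of p j))
                 = c \<otimes> cycle_prod G F0 p j (card (cycle_of p j)) \<otimes> inv c" using hyp by blast
    show "\<exists>\<alpha>. (\<forall>i. \<alpha> i \<in> carrier G) \<and> (\<forall>i\<in>cycle_of p j. F i = \<alpha> i \<otimes> F0 i \<otimes> inv (\<alpha> (inv_into UNIV p i)))"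
      by (rule coh_local[OF pS F F0 c e])
  qed
  from bchoice[OF this] obtain A where A0: "\<forall>j\<in>B. (\<forall>i. A j i \<in> carrier G) \<and> (\<forall>i\<in>cycle_of p j. F i = A j i \<otimes> F0 i \<otimes> inv (A j (inv_into UNIV p i)))"
    by blast
  then have A: "\<And>j. j \<in> B \<Longrightarrow> (\<forall>i. A j i \<in> carrier G) \<and> (\<forall>i\<in>cycle_of p j. F i = A j i \<otimes> F0 i \<otimes> inv (A j (inv_into UNIV p i)))"
    by blast
  define P where "P i j = (j \<in> B \<and> cycle_of p j = cycle_of p i)" for i j
  define \<alpha> where "\<alpha> i = (if \<exists>j. P i j then A (SOME j. P i j) i else \<one>)" for i
  have ac: "\<alpha> i \<in> carrier G" for i
  proof (cases "\<exists>j. P i j")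
    case True
    then have "P i (SOME j. P i j)" by (rule someI_ex)
    then show ?thesis unfolding \<alpha>_def using True A unfolding P_def by auto
  qed (simp add: \<alpha>_def)
  have main: "F i = \<alpha> i \<otimes> F0 i \<otimes> inv (\<alpha> (inv_into UNIV p i))" if i: "i \<in> B" for i
  proof -
    have ex: "\<exists>j. P i j" using i unfolding P_def by auto
    define j where "j = (SOME j. P i j)"
    have Pj: "P i j" unfolding j_def using ex by (rule someI_ex)
    have cyc: "cycle_of p (inv_into UNIV p i) = cycle_of p i"
      using cycle_of_eq[OF pS cycle_invp_in[OF pS self_in_cycle[OF pS]]] .
    have PP: "P (inv_into UNIV p i) = P i" unfolding P_def cyc ..
    have a1: "\<alpha> i = A j i" unfolding \<alpha>_def j_def using ex by simp
    have a2: "\<alpha> (inv_into UNIV p i) = A j (inv_into UNIV p i)" unfolding \<alpha>_def j_def PP using ex by simp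
    have "i \<in> cycle_of p j" using Pj self_in_cycle[OF pS, of i] unfolding P_def by simp
    then show ?thesis using A[of j] Pj a1 a2 unfolding P_def by auto
  qed
  show ?thesis using ac main by blast
qed

lemma closed_cycle:
  assumes pS: "p permutes S" "finite S" and Bc: "\<And>i. i \<in> B \<Longrightarrow> p i \<in> B" and i: "i \<in> B"
  shows "cycle_of p i \<subseteq> B"
proof
  fix y assume "y \<in> cycle_of p i"
  then obtain m where "y = (p ^^ m) i" unfolding cycle_of_def by auto
  moreover have "(p ^^ m) i \<in> B" for m by (induction m) (auto simp: i Bc)
  ultimately show "y \<in> B" by simp
qed

lemma closed_inv:
  fixes p :: "nat \<Rightarrow> nat"
  assumes pS: "p permutes S" "finite S" and Bc: "\<And>i. i \<in> B \<Longrightarrow> p i \<in> B" and i: "i \<in> B"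
  shows "inv_into UNIV p i \<in> B"
  using closed_cycle[OF pS Bc i] cycle_invp_in[OF pS self_in_cycle[OF pS]] by auto

lemma inv_pow_on:
  fixes p :: "nat \<Rightarrow> nat"
  assumes pS: "p permutes S" "finite S" and Bc: "\<And>i. i \<in> B \<Longrightarrow> p i \<in> B"
    and sB: "s permutes B" and sr: "\<And>i. i \<in> B \<Longrightarrow> (s ^^ r) i = p i" and i: "i \<in> B"
  shows "inv_into UNIV (s ^^ r) i = inv_into UNIV p i"
proof -
  have ib: "inv_into UNIV p i \<in> B" by (rule closed_inv[OF pS Bc i])
  have "(s ^^ r) (inv_into UNIV p i) = i" using sr[OF ib] surj_f_inv_f[OF bij_is_surj[OF permutes_bij[OF pS(1)]]] by simp
  moreover have "inj (s ^^ r)" using permutes_inj[OF permutes_funpow[OF sB]] .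
  ultimately show ?thesis by (simp add: inv_f_eq)
qed

lemma cp_block:
  assumes pS: "p permutes S" "finite S" and Bc: "\<And>i. i \<in> B \<Longrightarrow> p i \<in> B"
    and sB: "s permutes B" and sr: "\<And>i. i \<in> B \<Longrightarrow> (s ^^ r) i = p i"
    and f0: "\<And>i. f0 i \<in> carrier G" and j: "j \<in> B"
  shows "cycle_prod G (\<lambda>i. cycle_prod G f0 s i r) p j m = cycle_prod G f0 s j (r * m)"
proof -
  have "cycle_prod G (\<lambda>i. cycle_prod G f0 s i r) p j m = cycle_prod G (\<lambda>i. cycle_prod G f0 s i r) (s ^^ r) j m"
  proof (rule cp_local[where B=B])
    fix i assume i: "i \<in> B"
    show "inv_into UNIV p i = inv_into UNIV (s ^^ r) i \<and> inv_into UNIV p i \<in> B"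
      using inv_pow_on[OF pS Bc sB sr i] closed_inv[OF pS Bc i] by simp
  qed (use j in auto)
  also have "\<dots> = cycle_prod G f0 s j (r * m)" using cp_comp[OF f0 permutes_bij[OF sB]] by simp
  finally show ?thesis .
qed

lemma block_lemma:
  assumes pS: "p permutes S" "finite S" and F: "\<And>i. F i \<in> carrier G"
    and Bc: "\<And>i. i \<in> B \<Longrightarrow> p i \<in> B"
    and sB: "s permutes B" and sr: "\<And>i. i \<in> B \<Longrightarrow> (s ^^ r) i = p i"
    and f0: "\<And>i. f0 i \<in> carrier G"
    and hyp: "\<And>j. j \<in> B \<Longrightarrow> \<exists>c\<in>carrier G. cycle_prod G F p j (card (cycle_of p j))
                 = c \<otimes> cycle_prod G (\<lambda>i. cycle_prod G f0 s i r) p j (card (cycle_of p j)) \<otimes> inv c"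
  shows "\<exists>f. (\<forall>i. f i \<in> carrier G) \<and> (\<forall>i\<in>B. cycle_prod G f s i r = F i)"
proof -
  define F0 where "F0 = (\<lambda>i. cycle_prod G f0 s i r)"
  have F0c: "\<And>i. F0 i \<in> carrier G" unfolding F0_def using cp_closed[OF f0] by simp
  have "\<exists>\<alpha>. (\<forall>i. \<alpha> i \<in> carrier G) \<and> (\<forall>i\<in>B. F i = \<alpha> i \<otimes> F0 i \<otimes> inv (\<alpha> (inv_into UNIV p i)))"
  proof (rule coh_global[OF pS F F0c])
    fix j assume "j \<in> B"
    then show "\<exists>c\<in>carrier G. cycle_prod G F p j (card (cycle_of p j))
                 = c \<otimes> cycle_prod G F0 p j (card (cycle_of p j)) \<otimes> inv c"
      unfolding F0_def by (rule hyp)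
  qed
  then obtain \<alpha> where ac: "\<And>i. \<alpha> i \<in> carrier G"
    and ae: "\<And>i. i \<in> B \<Longrightarrow> F i = \<alpha> i \<otimes> F0 i \<otimes> inv (\<alpha> (inv_into UNIV p i))"
    by blast
  define f where "f i = \<alpha> i \<otimes> f0 i \<otimes> inv (\<alpha> (inv_into UNIV s i))" for i
  have fc: "\<And>i. f i \<in> carrier G" unfolding f_def using ac f0 by simp
  have sbB: "\<And>i. i \<in> B \<Longrightarrow> inv_into UNIV s i \<in> B"
    using permutes_in_image[OF permutes_inv[OF sB]] by simp
  have "cycle_prod G f s i r = F i" if i: "i \<in> B" for i
  proof -
    have "cycle_prod G f s i r = \<alpha> i \<otimes> cycle_prod G f0 s i r \<otimes> inv (\<alpha> ((inv_into UNIV s ^^ r) i))"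
    proof (rule cp_twist[where B=B, OF sbB _ ac f0 i])
      fix i' assume "i' \<in> B"
      show "f i' = \<alpha> i' \<otimes> f0 i' \<otimes> inv (\<alpha> (inv_into UNIV s i'))" by (simp add: f_def)
    qed
    also have "(inv_into UNIV s ^^ r) i = inv_into UNIV p i"
      using inv_pow_on[OF pS Bc sB sr i] inv_fn[OF permutes_bij[OF sB]] by simp
    finally show ?thesis using ae[OF i] unfolding F0_def by simp
  qed
  then show ?thesis using fc by blast
qed

end


lemma shift_transfer:
  fixes p :: "nat \<Rightarrow> nat"
  assumes pS: "p permutes S" "finite S"
    and e: "(p ^^ q) z = (p ^^ q') z" and c: "card (cycle_of p w) = card (cycle_of p z)"
  shows "(p ^^ q) w = (p ^^ q') w"
proof -
  have inj: "inj p" using permutes_inj[OF pS(1)] .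
  { fix a b assume ab: "a \<le> b" "(p ^^ a) z = (p ^^ b) z"
    have "(p ^^ (b - a)) z = z" using funpow_diff[OF inj ab] .
    then have "card (cycle_of p z) dvd (b - a)" using cycle_fix_iff[OF pS] by simp
    then have "(p ^^ (b - a)) w = w" using cycle_fix_iff[OF pS] c by simp
    then have "(p ^^ b) w = (p ^^ a) w"
      using ab funpow_add[of a "b - a" p] by (metis comp_apply le_add_diff_inverse) }
  note * = this
  show ?thesis
  proof (cases "q \<le> q'")
    case True then show ?thesis using *[of q q'] e by simp
  next
    case False then show ?thesis using *[of q' q] e by simp
  qed
qed

context group
begin

lemma cp_single:
  assumes y: "y \<in> carrier G" and ne: "\<And>t. 0 < t \<Longrightarrow> t < k \<Longrightarrow> (inv_into UNIV p ^^ t) j \<noteq> j" and k: "k > 0"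
  shows "cycle_prod G (\<lambda>i. if i = j then y else \<one>) p j k = y"
proof -
  have "m \<le> k \<Longrightarrow> cycle_prod G (\<lambda>i. if i = j then y else \<one>) p j m = (if m = 0 then \<one> else y)" for m
  proof (induction m)
    case (Suc m)
    then show ?case using y ne[of m] by auto
  qed simp
  then show ?thesis using k by simp
qed

lemma block_a:
  assumes pS: "p permutes S" "finite S" and F: "\<And>i. F i \<in> carrier G" and r: "prime r"
    and nd: "\<not> r dvd card (cycle_of p j0)"
    and y: "y \<in> carrier G" and xy: "cycle_prod G F p j0 (card (cycle_of p j0)) = y [^] r"
  shows "\<exists>s f. s permutes (cycle_of p j0) \<and> (\<forall>i\<in>cycle_of p j0. (s ^^ r) i = p i)
            \<and> (\<forall>i. f i \<in> carrier G) \<and> (\<forall>i\<in>cycle_of p j0. cycle_prod G f s i r = F i)"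
proof -
  define Z where "Z = cycle_of p j0"
  define k where "k = card Z"
  have k0: "k > 0" unfolding k_def Z_def using card_cycle_pos[OF pS] .
  have finZ: "finite Z" unfolding Z_def using finite_cycle[OF pS] .
  have Zc: "\<And>i. i \<in> Z \<Longrightarrow> p i \<in> Z" unfolding Z_def using cycle_p_in[OF pS] by blast
  have pZ: "\<And>i m. i \<in> Z \<Longrightarrow> (p ^^ m) i \<in> Z" unfolding Z_def using cycle_pow_in[OF pS] by blast
  have cZ: "\<And>i. i \<in> Z \<Longrightarrow> card (cycle_of p i) = k" unfolding k_def Z_def using card_cycle_eq[OF pS] by blast
  have perk: "(p ^^ (k * m)) i = i" if "i \<in> Z" for i m
    using fix_pow[OF cycle_period[OF pS, of i]] cZ[OF that] by simp
  have j0Z: "j0 \<in> Z" unfolding Z_def using self_in_cycle[OF pS] .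
  have "coprime r k" using prime_imp_coprime_nat[OF r] nd unfolding k_def Z_def by blast
  then have g1: "gcd r k = 1" by simp
  obtain u v where uv0: "r * u = k * v + gcd r k" using bezout_nat[of r k] r by (auto simp: prime_gt_0_nat)
  then have uv: "r * u = k * v + 1" using g1 by simp
  have cop: "coprime k u"
  proof -
    have "gcd k u dvd r * u" by simp
    moreover have "gcd k u dvd k * v" by simp
    ultimately have "gcd k u dvd r * u - k * v" by (rule dvd_diff_nat)
    then have "gcd k u dvd 1" using uv by simp
    then show ?thesis by (simp add: coprime_iff_gcd_eq_1)
  qed
  define s where "s i = (if i \<in> Z then (p ^^ u) i else i)" for i
  have spow: "(s ^^ m) i = (p ^^ (u * m)) i" if i: "i \<in> Z" for i m
  proof (induction m)
    case (Suc m)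
    have "(s ^^ Suc m) i = s ((p ^^ (u * m)) i)" using Suc by simp
    also have "\<dots> = (p ^^ u) ((p ^^ (u * m)) i)" unfolding s_def using pZ[OF i] by simp
    also have "\<dots> = (p ^^ (u * Suc m)) i" by (simp add: funpow_add)
    finally show ?case .
  qed simp
  have sr: "(s ^^ r) i = p i" if i: "i \<in> Z" for i
  proof -
    have "(s ^^ r) i = (p ^^ (1 + k * v)) i" using spow[OF i] uv by (simp add: mult.commute)
    also have "\<dots> = p ((p ^^ (k * v)) i)" by (simp add: funpow_add)
    also have "\<dots> = p i" using perk[OF i] by simp
    finally show ?thesis .
  qed
  have injpu: "inj (p ^^ u)" using inj_fn[OF permutes_inj[OF pS(1)]] .
  have sinj: "inj_on s Z"
  proof (rule inj_onI)
    fix a b assume "a \<in> Z" "b \<in> Z" "s a = s b"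
    then have "(p ^^ u) a = (p ^^ u) b" unfolding s_def by simp
    then show "a = b" using injpu by (simp add: inj_eq)
  qed
  have sZ: "s ` Z \<subseteq> Z" unfolding s_def using pZ by auto
  have sperm: "s permutes Z"
  proof (rule bij_imp_permutes)
    show "bij_betw s Z Z" unfolding bij_betw_def using sinj endo_inj_surj[OF finZ sZ sinj] by simp
    show "\<And>x. x \<notin> Z \<Longrightarrow> s x = x" unfolding s_def by simp
  qed
  have sbij: "bij s" using permutes_bij[OF sperm] .
  have sfix: "(s ^^ t) j0 = j0 \<longleftrightarrow> k dvd t" for t
  proof -
    have "(s ^^ t) j0 = j0 \<longleftrightarrow> (p ^^ (u * t)) j0 = j0" using spow[OF j0Z] by simp
    also have "\<dots> \<longleftrightarrow> k dvd u * t" using cycle_fix_iff[OF pS] unfolding k_def Z_def by simp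
    also have "\<dots> \<longleftrightarrow> k dvd t" using coprime_dvd_mult_right_iff[OF cop] by simp
    finally show ?thesis .
  qed
  have isfix: "(inv_into UNIV s ^^ t) j0 = j0 \<longleftrightarrow> k dvd t" for t
    using sfix inv_pow_fix_iff[OF sbij] by simp
  define f0 where "f0 i = (if i = j0 then y else \<one>)" for i
  have f0c: "\<And>i. f0 i \<in> carrier G" unfolding f0_def using y by simp
  have cy: "cycle_prod G f0 s j0 k = y" unfolding f0_def
    by (rule cp_single[OF y _ k0]) (use isfix in \<open>auto simp: nat_dvd_not_less\<close>)
  have Kk: "(inv_into UNIV s ^^ k) j0 = j0" using isfix by simp
  have Krk: "(inv_into UNIV s ^^ (r * k)) j0 = j0" using isfix by simp
  have X: "cycle_prod G f0 s j0 (r * k) = y [^] r"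
    using cp_pow[OF f0c Kk, where m=r] cy by (simp add: mult.commute)
  define x where "x = y [^] r"
  have xc: "x \<in> carrier G" unfolding x_def using y by simp
  define C where "C = conj_class G x"
  have C: "C \<in> conj_classes G" unfolding C_def conj_classes_def using xc by simp
  have xC: "x \<in> C" unfolding C_def using conj_class_self[OF xc] .
  have r0: "r > 0" using r prime_gt_0_nat by blast
  have hyp: "\<exists>c\<in>carrier G. cycle_prod G F p j (card (cycle_of p j))
                 = c \<otimes> cycle_prod G (\<lambda>i. cycle_prod G f0 s i r) p j (card (cycle_of p j)) \<otimes> inv c"
    if j: "j \<in> Z" for j
  proof -
    have cj: "card (cycle_of p j) = k" using cZ[OF j] .
    have e1: "cycle_prod G (\<lambda>i. cycle_prod G f0 s i r) p j k = cycle_prod G f0 s j (r * k)"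
      by (rule cp_block[OF pS Zc sperm sr f0c j])
    obtain q where q: "j = (p ^^ q) j0" using j unfolding Z_def cycle_of_def by auto
    have "(p ^^ q) j0 = (p ^^ (q + k * (v * q))) j0"
      using perk[OF j0Z, of "v * q"] by (simp add: funpow_add)
    also have "q + k * (v * q) = u * (r * q)" using uv
      by (metis add.commute add_mult_distrib mult.assoc mult.commute mult_1)
    finally have "j = (s ^^ (r * q)) j0" using q spow[OF j0Z] by simp
    moreover have "(s ^^ (r * k)) j0 = j0" using sfix by simp
    ultimately obtain t where t: "j = (inv_into UNIV s ^^ t) j0"
      using fwd_as_inv[OF sbij, of "r * k" j0 "r * q"] r0 k0 by auto
    have "cycle_prod G f0 s j (r * k) = inv (cycle_prod G f0 s j0 t) \<otimes> (y [^] r) \<otimes> cycle_prod G f0 s j0 t"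
      using cp_rot[OF f0c Krk, where s=t] t X by simp
    then have in1: "cycle_prod G (\<lambda>i. cycle_prod G f0 s i r) p j k \<in> C"
      using e1 class_closed[OF C xC[unfolded x_def]] cp_closed[OF f0c] by simp
    have "cycle_prod G F p j0 (card (cycle_of p j0)) \<in> C" using xy xC unfolding x_def by simp
    then have in2: "cycle_prod G F p j k \<in> C"
      using class_indep[OF pS F C, of j j0] j unfolding Z_def k_def by simp
    show ?thesis using class_conj_ex[OF C in2 in1] cj by simp
  qed
  obtain f where "\<forall>i. f i \<in> carrier G" "\<forall>i\<in>Z. cycle_prod G f s i r = F i"
    using block_lemma[OF pS F Zc sperm sr f0c hyp] by blast
  then show ?thesis using sperm sr unfolding Z_def by blast
qed

end


context group
begin

lemma block_b:
  assumes pS: "p permutes S" "finite S" and F: "\<And>i. F i \<in> carrier G" and r: "prime r"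
    and C: "C \<in> conj_classes G"
    and finT: "finite T" and cT: "card T = r"
    and T: "\<And>Z. Z \<in> T \<Longrightarrow> \<exists>j. Z = cycle_of p j \<and> card Z = k \<and> cycle_prod G F p j k \<in> C"
  shows "\<exists>s f. s permutes (\<Union>T) \<and> (\<forall>i\<in>\<Union>T. (s ^^ r) i = p i)
            \<and> (\<forall>i. f i \<in> carrier G) \<and> (\<forall>i\<in>\<Union>T. cycle_prod G f s i r = F i)"
proof -
  have r0: "r > 0" using r prime_gt_0_nat by blast
  have r1: "r \<ge> 2" using r prime_ge_2_nat by blast
  obtain e where e: "bij_betw e {0..<r} T" using ex_bij_betw_nat_finite[OF finT] cT by auto
  have "\<forall>Z\<in>T. \<exists>j. Z = cycle_of p j \<and> card Z = k \<and> cycle_prod G F p j k \<in> C" using T by blast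
  from bchoice[OF this] obtain bb where bb: "\<forall>Z\<in>T. Z = cycle_of p (bb Z) \<and> card Z = k \<and> cycle_prod G F p (bb Z) k \<in> C"
    by blast
  define b where "b a = bb (e a)" for a
  have eT: "a < r \<Longrightarrow> e a \<in> T" for a using e unfolding bij_betw_def by auto
  have be: "a < r \<Longrightarrow> e a = cycle_of p (b a)" for a using bb eT unfolding b_def by blast
  have bk: "a < r \<Longrightarrow> card (cycle_of p (b a)) = k" for a using bb eT be by metis
  have bC: "a < r \<Longrightarrow> cycle_prod G F p (b a) k \<in> C" for a using bb eT unfolding b_def by blast
  have k0: "k > 0" using bk[OF r0] card_cycle_pos[OF pS] by metis
  have distinct: "a = a'" if "a < r" "a' < r" "x \<in> cycle_of p (b a)" "x \<in> cycle_of p (b a')" for a a' x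
  proof -
    have "e a = e a'" using be that cycle_disj[OF pS] by metis
    then show ?thesis using e that unfolding bij_betw_def inj_on_def by auto
  qed
  define B where "B = \<Union>T"
  have B: "i \<in> B \<longleftrightarrow> (\<exists>a<r. \<exists>q. i = (p ^^ q) (b a))" for i
  proof
    assume "i \<in> B"
    then obtain Z where "Z \<in> T" "i \<in> Z" unfolding B_def by auto
    then obtain a where "a < r" "Z = e a" using e unfolding bij_betw_def by auto
    then show "\<exists>a<r. \<exists>q. i = (p ^^ q) (b a)" using be \<open>i \<in> Z\<close> unfolding cycle_of_def by auto
  next
    assume "\<exists>a<r. \<exists>q. i = (p ^^ q) (b a)"
    then obtain a q where "a < r" "i = (p ^^ q) (b a)" by auto
    then have "i \<in> e a" using be unfolding cycle_of_def by auto
    then show "i \<in> B" unfolding B_def using eT \<open>a < r\<close> by auto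
  qed
  have inB: "a < r \<Longrightarrow> (p ^^ q) (b a) \<in> B" for a q using B by blast
  have inB2: "a < r \<Longrightarrow> p ((p ^^ q) (b a)) \<in> B" for a q using inB[of a "Suc q"] by simp
  have incyc: "(p ^^ q) (b a) \<in> cycle_of p (b a)" for a q unfolding cycle_of_def by auto
  have perk: "a < r \<Longrightarrow> (p ^^ (q + k * m)) (b a) = (p ^^ q) (b a)" for a q m
    using fix_pow[OF cycle_period[OF pS, of "b a"], of m] bk by (simp add: funpow_add)
  define nxt where "nxt a q = (if Suc a < r then (p ^^ q) (b (Suc a)) else (p ^^ Suc q) (b 0))" for a q
  define Q where "Q i y = (\<exists>a q. a < r \<and> i = (p ^^ q) (b a) \<and> y = nxt a q)" for i y
  define s where "s i = (if i \<in> B then (SOME y. Q i y) else i)" for i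
  have wd: "y = y'" if "Q i y" "Q i y'" for i y y'
  proof -
    have "\<exists>a q. a < r \<and> i = (p ^^ q) (b a) \<and> y = nxt a q" using that(1) by (simp add: Q_def)
    then obtain a q where aq: "a < r" "i = (p ^^ q) (b a)" "y = nxt a q" by blast
    have "\<exists>a q. a < r \<and> i = (p ^^ q) (b a) \<and> y' = nxt a q" using that(2) by (simp add: Q_def)
    then obtain a' q' where aq': "a' < r" "i = (p ^^ q') (b a')" "y' = nxt a' q'" by blast
    have "a = a'" using distinct[OF aq(1) aq'(1), of i] aq aq' incyc by metis
    then have eq: "(p ^^ q) (b a) = (p ^^ q') (b a)" using aq aq' by simp
    show ?thesis
    proof (cases "Suc a < r")
      case True
      have "(p ^^ q) (b (Suc a)) = (p ^^ q') (b (Suc a))"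
        using shift_transfer[OF pS eq] bk True aq(1) by simp
      then show ?thesis using aq aq' \<open>a = a'\<close> True unfolding nxt_def by simp
    next
      case False
      have "(p ^^ q) (b 0) = (p ^^ q') (b 0)"
        using shift_transfer[OF pS eq] bk r0 aq(1) by simp
      then show ?thesis using aq aq' \<open>a = a'\<close> False unfolding nxt_def by simp
    qed
  qed
  have s_eq: "s ((p ^^ q) (b a)) = nxt a q" if a: "a < r" for a q
  proof -
    have Q: "Q ((p ^^ q) (b a)) (nxt a q)" unfolding Q_def using a by blast
    then have "Q ((p ^^ q) (b a)) (SOME y. Q ((p ^^ q) (b a)) y)" by (rule someI)
    then have "(SOME y. Q ((p ^^ q) (b a)) y) = nxt a q" using wd Q by blast
    then show ?thesis unfolding s_def using inB[OF a] by simp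
  qed
  have La: "(s ^^ d) ((p ^^ q) (b a)) = (p ^^ q) (b (a + d))" if "a + d < r" for a d q
    using that
  proof (induction d)
    case (Suc d)
    then have "(s ^^ Suc d) ((p ^^ q) (b a)) = s ((p ^^ q) (b (a + d)))" by simp
    also have "\<dots> = (p ^^ q) (b (a + Suc d))" using s_eq[of "a + d" q] Suc.prems unfolding nxt_def by simp
    finally show ?case .
  qed simp
  have wrap: "s ((p ^^ q) (b (r - 1))) = (p ^^ Suc q) (b 0)" for q
    using s_eq[of "r - 1" q] r0 unfolding nxt_def by simp
  have spow_r: "(s ^^ r) ((p ^^ q) (b a)) = (p ^^ Suc q) (b a)" if a: "a < r" for a q
  proof -
    have rr: "r = a + Suc (r - 1 - a)" using a by simp
    have "(s ^^ r) ((p ^^ q) (b a)) = (s ^^ a) (s ((s ^^ (r - 1 - a)) ((p ^^ q) (b a))))"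
      by (subst rr) (simp add: funpow_add funpow_swap1)
    also have "(s ^^ (r - 1 - a)) ((p ^^ q) (b a)) = (p ^^ q) (b (r - 1))" using La[of a "r - 1 - a" q] a by simp
    also have "s \<dots> = (p ^^ Suc q) (b 0)" by (rule wrap)
    also have "(s ^^ a) \<dots> = (p ^^ Suc q) (b a)" using La[of 0 a "Suc q"] a by simp
    finally show ?thesis .
  qed
  have sr: "(s ^^ r) i = p i" if i: "i \<in> B" for i
    using i spow_r unfolding B by auto
  have Bc: "p i \<in> B" if i: "i \<in> B" for i
  proof -
    obtain a q where "a < r" "i = (p ^^ q) (b a)" using i B by auto
    then have "p i = (p ^^ Suc q) (b a)" by simp
    then show ?thesis using inB[OF \<open>a < r\<close>, of "Suc q"] by (simp del: funpow.simps)
  qed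
  have finB: "finite B" unfolding B_def using finT T finite_cycle[OF pS] by blast
  have sB: "s ` B \<subseteq> B"
  proof
    fix y assume "y \<in> s ` B"
    then obtain i where i: "i \<in> B" "y = s i" by auto
    then obtain a q where aq: "a < r" "i = (p ^^ q) (b a)" using B by auto
    then have "y = nxt a q" using s_eq i by simp
    then show "y \<in> B" unfolding nxt_def using inB inB2 aq r0 by auto
  qed
  have Bs: "B \<subseteq> s ` B"
  proof
    fix i assume "i \<in> B"
    then obtain a q where aq: "a < r" "i = (p ^^ q) (b a)" using B by auto
    show "i \<in> s ` B"
    proof (cases "a = 0")
      case False
      then have "s ((p ^^ q) (b (a - 1))) = i" using s_eq[of "a - 1" q] aq unfolding nxt_def by simp
      moreover have "(p ^^ q) (b (a - 1)) \<in> B" using inB aq by simp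
      ultimately show ?thesis by (metis imageI)
    next
      case True
      have "(p ^^ Suc (q + k - 1)) (b 0) = (p ^^ (q + k * 1)) (b 0)" using k0 by simp
      also have "\<dots> = i" using perk[OF r0, of q 1] aq True by (simp del: mult_1_right)
      finally have "s ((p ^^ (q + k - 1)) (b (r - 1))) = i" using wrap by simp
      moreover have "(p ^^ (q + k - 1)) (b (r - 1)) \<in> B" using inB r0 by simp
      ultimately show ?thesis by (metis imageI)
    qed
  qed
  have sBB: "s ` B = B" using sB Bs by blast
  have sperm: "s permutes B"
  proof (rule bij_imp_permutes)
    have "inj_on s B" by (rule eq_card_imp_inj_on[OF finB]) (simp add: sBB)
    then show "bij_betw s B B" unfolding bij_betw_def using sBB by simp
    show "\<And>x. x \<notin> B \<Longrightarrow> s x = x" unfolding s_def by simp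
  qed
  have sbij: "bij s" using permutes_bij[OF sperm] .
  have srq: "(s ^^ (r * q)) i = (p ^^ q) i" if i: "i \<in> B" for i q
  proof (induction q)
    case (Suc q)
    have pqB: "(p ^^ q) i \<in> B" using i Bc by (induction q) auto
    have "(s ^^ (r * Suc q)) i = (s ^^ r) ((s ^^ (r * q)) i)" by (simp add: funpow_add)
    also have "\<dots> = p ((p ^^ q) i)" using Suc sr[OF pqB] by simp
    finally show ?case by simp
  qed simp
  have orb: "(s ^^ (r * q + a)) (b 0) = (p ^^ q) (b a)" if a: "a < r" for a q
  proof -
    have "(s ^^ (a + r * q)) (b 0) = (s ^^ a) ((s ^^ (r * q)) (b 0))" by (simp add: funpow_add)
    also have "(s ^^ (r * q)) (b 0) = (p ^^ q) (b 0)" using srq[OF inB[OF r0, of 0]] by simp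
    also have "(s ^^ a) ((p ^^ q) (b 0)) = (p ^^ q) (b a)" using La[of 0 a q] a by simp
    finally show ?thesis by (simp add: add.commute)
  qed
  have nfix: "(s ^^ m) (b 0) \<noteq> b 0" if m: "0 < m" "m < r * k" for m
  proof
    assume eq: "(s ^^ m) (b 0) = b 0"
    define q where "q = m div r"
    define a where "a = m mod r"
    have a: "a < r" unfolding a_def using r0 by simp
    have "m = r * q + a" unfolding q_def a_def by simp
    then have pq: "(p ^^ q) (b a) = b 0" using orb[OF a, of q] eq by simp
    show False
    proof (cases "a = 0")
      case False
      have "b 0 \<in> cycle_of p (b a)" using pq incyc by metis
      moreover have "b 0 \<in> cycle_of p (b 0)" using self_in_cycle[OF pS] .
      ultimately have "a = 0" using distinct[OF a r0] by blast
      then show False using False by simp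
    next
      case True
      then have "(p ^^ q) (b 0) = b 0" using pq by simp
      then have "k dvd q" using cycle_fix_iff[OF pS] bk[OF r0] by simp
      moreover have "q > 0" using m True \<open>m = r * q + a\<close> by (cases q) auto
      moreover have "q < k" using m True \<open>m = r * q + a\<close> by simp
      ultimately show False by (simp add: nat_dvd_not_less)
    qed
  qed
  have ifix: "(inv_into UNIV s ^^ m) (b 0) \<noteq> b 0" if "0 < m" "m < r * k" for m
    using nfix[OF that] inv_pow_fix_iff[OF sbij] by simp
  have sfix: "(s ^^ (r * k)) (b 0) = b 0" using srq[OF inB[OF r0, of 0]] perk[OF r0, of 0 1] by simp
  then have isfix: "(inv_into UNIV s ^^ (r * k)) (b 0) = b 0" using inv_pow_fix_iff[OF sbij] by simp
  define x0 where "x0 = cycle_prod G F p (b 0) k"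
  have x0C: "x0 \<in> C" unfolding x0_def using bC[OF r0] .
  have x0c: "x0 \<in> carrier G" unfolding x0_def using cp_closed F by simp
  define f0 where "f0 i = (if i = b 0 then x0 else \<one>)" for i
  have f0c: "\<And>i. f0 i \<in> carrier G" unfolding f0_def using x0c by simp
  have rk0: "r * k > 0" using r0 k0 by simp
  have X: "cycle_prod G f0 s (b 0) (r * k) = x0" unfolding f0_def
    by (rule cp_single[OF x0c ifix rk0])
  have hyp: "\<exists>c\<in>carrier G. cycle_prod G F p j (card (cycle_of p j))
                 = c \<otimes> cycle_prod G (\<lambda>i. cycle_prod G f0 s i r) p j (card (cycle_of p j)) \<otimes> inv c"
    if j: "j \<in> B" for j
  proof -
    obtain a q where aq: "a < r" "j = (p ^^ q) (b a)" using j B by auto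
    have jc: "j \<in> cycle_of p (b a)" using aq incyc by simp
    have cj: "card (cycle_of p j) = k" using card_cycle_eq[OF pS jc] bk[OF aq(1)] by simp
    have e1: "cycle_prod G (\<lambda>i. cycle_prod G f0 s i r) p j k = cycle_prod G f0 s j (r * k)"
      by (rule cp_block[OF pS Bc sperm sr f0c j])
    have "j = (s ^^ (r * q + a)) (b 0)" using orb[OF aq(1)] aq by simp
    then obtain t where t: "j = (inv_into UNIV s ^^ t) (b 0)"
      using fwd_as_inv[OF sbij sfix rk0] by auto
    have "cycle_prod G f0 s j (r * k) = inv (cycle_prod G f0 s (b 0) t) \<otimes> x0 \<otimes> cycle_prod G f0 s (b 0) t"
      using cp_rot[OF f0c isfix, where s=t] t X by simp
    then have in1: "cycle_prod G (\<lambda>i. cycle_prod G f0 s i r) p j k \<in> C"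
      using e1 class_closed[OF C x0C] cp_closed[OF f0c] by simp
    have in2: "cycle_prod G F p j k \<in> C"
      using class_indep[OF pS F C jc] bk[OF aq(1)] bC[OF aq(1)] by simp
    show ?thesis using class_conj_ex[OF C in2 in1] cj by simp
  qed
  obtain f where "\<forall>i. f i \<in> carrier G" "\<forall>i\<in>B. cycle_prod G f s i r = F i"
    using block_lemma[OF pS F Bc sperm sr f0c hyp] by blast
  then show ?thesis using sperm sr unfolding B_def by blast
qed

end


definition cyc_set :: "('a, 'b) monoid_scheme \<Rightarrow> (nat \<Rightarrow> 'a) \<Rightarrow> (nat \<Rightarrow> nat) \<Rightarrow> nat set \<Rightarrow> 'a set \<Rightarrow> nat \<Rightarrow> nat set set" where
  "cyc_set G F p A C k = {Z. \<exists>j\<in>A. Z = cycle_of p j \<and> card Z = k \<and> cycle_prod G F p j k \<in> C}"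

context group
begin

lemma reverse_ind:
  assumes pS: "p permutes {1..n}" and F: "\<And>i. F i \<in> carrier G" and r: "prime r"
  shows "A \<subseteq> {1..n} \<Longrightarrow> (\<forall>i\<in>A. p i \<in> A) \<Longrightarrow>
    (\<forall>C\<in>conj_classes G. \<forall>k\<in>{1..n}. (r dvd k \<or> \<not> class_is_rth_power G r C) \<longrightarrow> r dvd card (cyc_set G F p A C k)) \<Longrightarrow>
    \<exists>s f. s permutes A \<and> (\<forall>i. f i \<in> carrier G) \<and> (\<forall>i. i \<notin> A \<longrightarrow> f i = \<one>)
       \<and> (\<forall>i\<in>A. (s ^^ r) i = p i) \<and> (\<forall>i\<in>A. cycle_prod G f s i r = F i)"
proof (induction "card A" arbitrary: A rule: less_induct)
  case less
  have fin: "finite {1..n::nat}" by simp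
  have finA: "finite A" using less.prems(1) finite_subset by blast
  have Ac: "\<And>i. i \<in> A \<Longrightarrow> p i \<in> A" using less.prems(2) by blast
  have r0: "r > 0" using r prime_gt_0_nat by blast
  show ?case
  proof (cases "A = {}")
    case True
    show ?thesis
      by (rule exI[of _ id], rule exI[of _ "\<lambda>_. \<one>"]) (simp add: True)
  next
    case False
    then obtain j0 where j0: "j0 \<in> A" by auto
    define Z0 where "Z0 = cycle_of p j0"
    define k where "k = card Z0"
    define x where "x = cycle_prod G F p j0 k"
    define C where "C = conj_class G x"
    have xc: "x \<in> carrier G" unfolding x_def using cp_closed F by simp
    have C: "C \<in> conj_classes G" unfolding C_def conj_classes_def using xc by simp
    have xC: "x \<in> C" unfolding C_def using conj_class_self[OF xc] .
    have cycA: "\<And>j. j \<in> A \<Longrightarrow> cycle_of p j \<subseteq> A" using closed_cycle[OF pS fin Ac] by blast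
    have Z0A: "Z0 \<subseteq> A" unfolding Z0_def using cycA[OF j0] .
    have k1: "k \<ge> 1" unfolding k_def Z0_def using card_cycle_pos[OF pS fin] by (simp add: Suc_le_eq)
    have kn: "k \<le> n" unfolding k_def using card_mono[OF fin] Z0A less.prems(1) by fastforce
    have Z0S: "Z0 \<in> cyc_set G F p A C k" unfolding cyc_set_def using j0 xC unfolding Z0_def k_def x_def by blast
    have finCS: "finite (cyc_set G F p A C' k')" for C' k'
    proof (rule finite_subset)
      show "cyc_set G F p A C' k' \<subseteq> Pow A" unfolding cyc_set_def using cycA by auto
    qed (simp add: finA)
    obtain T where TS: "T \<subseteq> cyc_set G F p A C k" and finT: "finite T" and Tne: "T \<noteq> {}"
      and Tcase: "(\<not> r dvd k \<and> class_is_rth_power G r C \<and> T = {Z0}) \<or> card T = r"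
    proof (cases "\<not> r dvd k \<and> class_is_rth_power G r C")
      case True
      then show ?thesis using that[of "{Z0}"] Z0S by simp
    next
      case False
      then have "r dvd card (cyc_set G F p A C k)" using less.prems(3) C k1 kn by auto
      moreover have "card (cyc_set G F p A C k) > 0" using finCS Z0S card_gt_0_iff by blast
      ultimately have "r \<le> card (cyc_set G F p A C k)" by (simp add: dvd_imp_le)
      then obtain T where "T \<subseteq> cyc_set G F p A C k" "card T = r" "finite T"
        by (rule obtain_subset_with_card_n)
      then show ?thesis using r0 by (intro that[of T]) auto
    qed
    have TZ: "\<And>Z. Z \<in> T \<Longrightarrow> \<exists>j\<in>A. Z = cycle_of p j \<and> card Z = k \<and> cycle_prod G F p j k \<in> C"
      using TS unfolding cyc_set_def by blast
    define B where "B = \<Union>T"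
    define A' where "A' = A - B"
    have BA: "B \<subseteq> A" unfolding B_def using TZ cycA by blast
    have Bne: "B \<noteq> {}" unfolding B_def using Tne TZ self_in_cycle[OF pS fin] by blast
    have Bc: "\<And>i. i \<in> B \<Longrightarrow> p i \<in> B" unfolding B_def using TZ cycle_p_in[OF pS fin] by blast
    have "A' \<subset> A" unfolding A'_def using BA Bne by blast
    then have lt: "card A' < card A" by (rule psubset_card_mono[OF finA])
    have A'sub: "A' \<subseteq> {1..n}" unfolding A'_def using less.prems(1) by auto
    have pinj: "inj p" using permutes_inj[OF pS] .
    have A'c: "\<forall>i\<in>A'. p i \<in> A'"
    proof
      fix i assume i: "i \<in> A'"
      have "p i \<notin> B"
      proof
        assume "p i \<in> B"
        then obtain Z where Z: "Z \<in> T" "p i \<in> Z" unfolding B_def by auto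
        then obtain j where j: "Z = cycle_of p j" using TZ by blast
        have "inv_into UNIV p (p i) \<in> Z" using cycle_invp_in[OF pS fin] Z j by blast
        then have "i \<in> B" using inv_f_f[OF pinj] Z unfolding B_def by auto
        then show False using i unfolding A'_def by simp
      qed
      then show "p i \<in> A'" using Ac i unfolding A'_def by simp
    qed
    have cs': "cyc_set G F p A' C' k' = cyc_set G F p A C' k' - T" for C' k'
    proof
      show "cyc_set G F p A' C' k' \<subseteq> cyc_set G F p A C' k' - T"
      proof
        fix Z assume "Z \<in> cyc_set G F p A' C' k'"
        then obtain j where j: "j \<in> A'" "Z = cycle_of p j" "card Z = k'" "cycle_prod G F p j k' \<in> C'"
          unfolding cyc_set_def by blast
        have "Z \<notin> T" using j self_in_cycle[OF pS fin, of j] unfolding A'_def B_def by auto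
        moreover have "Z \<in> cyc_set G F p A C' k'" using j unfolding cyc_set_def A'_def by blast
        ultimately show "Z \<in> cyc_set G F p A C' k' - T" by simp
      qed
      show "cyc_set G F p A C' k' - T \<subseteq> cyc_set G F p A' C' k'"
      proof
        fix Z assume Z: "Z \<in> cyc_set G F p A C' k' - T"
        then obtain j where j: "j \<in> A" "Z = cycle_of p j" "card Z = k'" "cycle_prod G F p j k' \<in> C'"
          unfolding cyc_set_def by blast
        have "j \<notin> B"
        proof
          assume "j \<in> B"
          then obtain Z' where Z': "Z' \<in> T" "j \<in> Z'" unfolding B_def by auto
          then obtain j' where "Z' = cycle_of p j'" using TZ by blast
          then have "cycle_of p j = Z'" using cycle_of_eq[OF pS fin] Z' by simp
          then show False using Z Z' j by simp
        qed
        then show "Z \<in> cyc_set G F p A' C' k'" using j unfolding cyc_set_def A'_def by blast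
      qed
    qed
    have disj: "C' = C \<and> k' = k" if C': "C' \<in> conj_classes G" and ne: "T \<inter> cyc_set G F p A C' k' \<noteq> {}" for C' k'
    proof -
      obtain Z where Z: "Z \<in> T" "Z \<in> cyc_set G F p A C' k'" using ne by auto
      obtain j1 where j1: "Z = cycle_of p j1" "card Z = k" "cycle_prod G F p j1 k \<in> C" using TZ Z(1) by blast
      obtain j2 where j2: "Z = cycle_of p j2" "card Z = k'" "cycle_prod G F p j2 k' \<in> C'"
        using Z(2) unfolding cyc_set_def by blast
      have kk: "k' = k" using j1 j2 by simp
      have "j2 \<in> cycle_of p j1" using j1 j2 self_in_cycle[OF pS fin, of j2] by simp
      then have "cycle_prod G F p j2 k \<in> C" using class_indep_iff[where F=F, OF pS fin F C, of j2 j1] j1 by simp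
      then have "C = C'" using classes_eq[OF C C'] j2 kk by simp
      then show ?thesis using kk by simp
    qed
    have cond': "\<forall>C'\<in>conj_classes G. \<forall>k'\<in>{1..n}. (r dvd k' \<or> \<not> class_is_rth_power G r C') \<longrightarrow> r dvd card (cyc_set G F p A' C' k')"
    proof (intro ballI impI)
      fix C' k' assume C': "C' \<in> conj_classes G" and k': "k' \<in> {1..n}" and cd: "r dvd k' \<or> \<not> class_is_rth_power G r C'"
      have base: "r dvd card (cyc_set G F p A C' k')" using less.prems(3) C' k' cd by blast
      show "r dvd card (cyc_set G F p A' C' k')"
      proof (cases "C' = C \<and> k' = k")
        case True
        then have "card T = r" using Tcase cd by auto
        then have "card (cyc_set G F p A' C' k') = card (cyc_set G F p A C' k') - r"
          using cs' card_Diff_subset[OF finT] TS True by simp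
        then show ?thesis using base by (simp add: dvd_diff_nat)
      next
        case False
        then have "T \<inter> cyc_set G F p A C' k' = {}" using disj[OF C'] by blast
        then have "cyc_set G F p A' C' k' = cyc_set G F p A C' k'" using cs' by blast
        then show ?thesis using base by simp
      qed
    qed
    obtain s' f' where s': "s' permutes A'" and f'c: "\<forall>i. f' i \<in> carrier G" and f'1: "\<forall>i. i \<notin> A' \<longrightarrow> f' i = \<one>"
      and s'r: "\<forall>i\<in>A'. (s' ^^ r) i = p i" and f'F: "\<forall>i\<in>A'. cycle_prod G f' s' i r = F i"
      using less.hyps[OF lt A'sub A'c cond'] by blast
    obtain sB fB where sB: "sB permutes B" and sBr: "\<forall>i\<in>B. (sB ^^ r) i = p i"
      and fBc: "\<forall>i. fB i \<in> carrier G" and fBF: "\<forall>i\<in>B. cycle_prod G fB sB i r = F i"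
    proof (cases "\<not> r dvd k \<and> class_is_rth_power G r C \<and> T = {Z0}")
      case True
      then have BZ: "B = cycle_of p j0" unfolding B_def Z0_def by simp
      obtain y where y: "y \<in> carrier G" "x = y [^] r"
        using True xC unfolding class_is_rth_power_def by blast
      have nd: "\<not> r dvd card (cycle_of p j0)" using True unfolding k_def Z0_def by simp
      have xy: "cycle_prod G F p j0 (card (cycle_of p j0)) = y [^] r" using y unfolding x_def k_def Z0_def by simp
      obtain s0 f0 where s0: "s0 permutes cycle_of p j0" "\<forall>i\<in>cycle_of p j0. (s0 ^^ r) i = p i"
        "\<forall>i. f0 i \<in> carrier G" "\<forall>i\<in>cycle_of p j0. cycle_prod G f0 s0 i r = F i"
        using block_a[where F=F, OF pS fin F r nd y(1) xy] by blast
      show ?thesis by (rule that[of s0 f0]) (use s0 BZ in auto)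
    next
      case False
      then have cT: "card T = r" using Tcase by blast
      have TT: "\<And>Z. Z \<in> T \<Longrightarrow> \<exists>j. Z = cycle_of p j \<and> card Z = k \<and> cycle_prod G F p j k \<in> C"
        using TZ by blast
      obtain s0 f0 where s0: "s0 permutes \<Union>T" "\<forall>i\<in>\<Union>T. (s0 ^^ r) i = p i"
        "\<forall>i. f0 i \<in> carrier G" "\<forall>i\<in>\<Union>T. cycle_prod G f0 s0 i r = F i"
        using block_b[where F=F, OF pS fin F r C finT cT TT] by blast
      show ?thesis by (rule that[of s0 f0]) (use s0 in \<open>auto simp: B_def\<close>)
    qed
    define s where "s = s' \<circ> sB"
    define f where "f i = (if i \<in> B then fB i else f' i)" for i
    have sBA: "sB permutes A" using permutes_subset[OF sB BA] .
    have s'A: "s' permutes A" using permutes_subset[OF s'] unfolding A'_def by blast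
    have sA: "s permutes A" unfolding s_def by (rule permutes_compose[OF sBA s'A])
    have sinj: "inj s" using permutes_inj[OF sA] .
    have fc: "\<forall>i. f i \<in> carrier G" unfolding f_def using fBc f'c by simp
    have f1: "\<forall>i. i \<notin> A \<longrightarrow> f i = \<one>" unfolding f_def using f'1 BA unfolding A'_def by auto
    have onB: "s i = sB i" if "i \<in> B" for i
    proof -
      have "sB i \<in> B" using permutes_in_image[OF sB] that by simp
      then have "sB i \<notin> A'" unfolding A'_def by simp
      then show ?thesis unfolding s_def using permutes_not_in[OF s'] by simp
    qed
    have onA': "s i = s' i" if "i \<in> A'" for i
    proof -
      have "i \<notin> B" using that unfolding A'_def by simp
      then show ?thesis unfolding s_def using permutes_not_in[OF sB] by simp
    qed
    have powB: "(s ^^ m) i = (sB ^^ m) i" if "i \<in> B" for i m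
    proof (induction m)
      case (Suc m)
      have "(sB ^^ m) i \<in> B" using permutes_in_image[OF permutes_funpow[OF sB]] that by simp
      then show ?case using Suc onB by simp
    qed simp
    have powA': "(s ^^ m) i = (s' ^^ m) i" if "i \<in> A'" for i m
    proof (induction m)
      case (Suc m)
      have "(s' ^^ m) i \<in> A'" using permutes_in_image[OF permutes_funpow[OF s']] that by simp
      then show ?case using Suc onA' by simp
    qed simp
    have sr: "\<forall>i\<in>A. (s ^^ r) i = p i"
    proof
      fix i assume "i \<in> A"
      then have "i \<in> B \<or> i \<in> A'" unfolding A'_def by blast
      then show "(s ^^ r) i = p i"
      proof
        assume "i \<in> B" then show ?thesis using powB[of i r] sBr by simp
      next
        assume "i \<in> A'" then show ?thesis using powA'[of i r] s'r by simp
      qed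
    qed
    have invB: "inv_into UNIV s i = inv_into UNIV sB i" if "i \<in> B" for i
    proof -
      have ib: "inv_into UNIV sB i \<in> B" using permutes_in_image[OF permutes_inv[OF sB]] that by simp
      have "s (inv_into UNIV sB i) = i" using onB[OF ib] permutes_inverses(1)[OF sB] by simp
      then show ?thesis by (rule inv_f_eq[OF sinj])
    qed
    have invA': "inv_into UNIV s i = inv_into UNIV s' i" if "i \<in> A'" for i
    proof -
      have ib: "inv_into UNIV s' i \<in> A'" using permutes_in_image[OF permutes_inv[OF s']] that by simp
      have "s (inv_into UNIV s' i) = i" using onA'[OF ib] permutes_inverses(1)[OF s'] by simp
      then show ?thesis by (rule inv_f_eq[OF sinj])
    qed
    have fF: "\<forall>i\<in>A. cycle_prod G f s i r = F i"
    proof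
      fix i assume iA: "i \<in> A"
      show "cycle_prod G f s i r = F i"
      proof (cases "i \<in> B")
        case True
        have "cycle_prod G f s i r = cycle_prod G fB sB i r"
        proof (rule cp_local[where B=B])
          fix x assume x: "x \<in> B"
          show "inv_into UNIV s x = inv_into UNIV sB x \<and> inv_into UNIV s x \<in> B"
            using invB[OF x] permutes_in_image[OF permutes_inv[OF sB]] x by simp
          show "f x = fB x" using x unfolding f_def by simp
        qed (rule True)
        then show ?thesis using fBF True by simp
      next
        case False
        then have iA': "i \<in> A'" using iA unfolding A'_def by simp
        have "cycle_prod G f s i r = cycle_prod G f' s' i r"
        proof (rule cp_local[where B=A'])
          fix x assume x: "x \<in> A'"
          show "inv_into UNIV s x = inv_into UNIV s' x \<and> inv_into UNIV s x \<in> A'"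
            using invA'[OF x] permutes_in_image[OF permutes_inv[OF s']] x by simp
          show "f x = f' x" using x unfolding f_def A'_def by simp
        qed (rule iA')
        then show ?thesis using f'F iA' by simp
      qed
    qed
    show ?thesis using sA fc f1 sr fF by blast
  qed
qed

end

theorem proposition4p3:
  fixes G :: "('a, 'b) monoid_scheme" and n r :: nat
    and g :: "(nat \<Rightarrow> 'a) \<times> (nat \<Rightarrow> nat)"
  assumes "group G" and "finite (carrier G)" and "prime r"
    and "g \<in> wr_carrier G n"
  shows "wr_is_rth_power G n r g \<longleftrightarrow>
    (\<forall>C \<in> conj_classes G. \<forall>j \<in> {1..n}.
        (r dvd j \<or> \<not> class_is_rth_power G r C) \<longrightarrow> r dvd wr_type G n g C j)"
proof -
  interpret group G by (rule assms(1))
  obtain F p where g: "g = (F, p)" by (cases g)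
  have gc: "(F, p) \<in> wr_carrier G n" using assms(4) g by simp
  have pS: "p permutes {1..n}" and F: "\<And>i. F i \<in> carrier G" and F1: "\<And>i. i \<notin> {1..n} \<Longrightarrow> F i = \<one>\<^bsub>G\<^esub>"
    using wr_carrier_D[OF gc] by auto
  have fin: "finite {1..n::nat}" by simp
  show ?thesis
  proof
    assume "wr_is_rth_power G n r g"
    then obtain h where h: "h \<in> wr_carrier G n" "wr_pow G h r = g" unfolding wr_is_rth_power_def by blast
    obtain f s where hfs: "h = (f, s)" by (cases h)
    show "\<forall>C \<in> conj_classes G. \<forall>j \<in> {1..n}. (r dvd j \<or> \<not> class_is_rth_power G r C) \<longrightarrow> r dvd wr_type G n g C j"
      using forward[OF assms(3), of f s n] h hfs by blast
  next
    assume R: "\<forall>C \<in> conj_classes G. \<forall>j \<in> {1..n}. (r dvd j \<or> \<not> class_is_rth_power G r C) \<longrightarrow> r dvd wr_type G n g C j"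
    have wt: "wr_type G n g C k = card (cyc_set G F p {1..n} C k)" for C k
      unfolding wr_type_def cyc_set_def g by simp
    have "\<exists>s f. s permutes {1..n} \<and> (\<forall>i. f i \<in> carrier G) \<and> (\<forall>i. i \<notin> {1..n} \<longrightarrow> f i = \<one>\<^bsub>G\<^esub>)
       \<and> (\<forall>i\<in>{1..n}. (s ^^ r) i = p i) \<and> (\<forall>i\<in>{1..n}. cycle_prod G f s i r = F i)"
    proof (rule reverse_ind[OF pS F assms(3)])
      show "\<forall>i\<in>{1..n}. p i \<in> {1..n}" using permutes_in_image[OF pS] by simp
      show "\<forall>C\<in>conj_classes G. \<forall>k\<in>{1..n}. (r dvd k \<or> \<not> class_is_rth_power G r C) \<longrightarrow> r dvd card (cyc_set G F p {1..n} C k)"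
        using R wt by simp
    qed simp
    then obtain s f where s: "s permutes {1..n}" and fc: "\<forall>i. f i \<in> carrier G" and f1: "\<forall>i. i \<notin> {1..n} \<longrightarrow> f i = \<one>\<^bsub>G\<^esub>"
      and sr: "\<forall>i\<in>{1..n}. (s ^^ r) i = p i" and fF: "\<forall>i\<in>{1..n}. cycle_prod G f s i r = F i" by blast
    have hc: "(f, s) \<in> wr_carrier G n" unfolding wr_carrier_def using s fc f1 by auto
    have sbij: "bij s" using permutes_bij[OF s] .
    have e1: "s ^^ r = p"
    proof
      fix i show "(s ^^ r) i = p i"
      proof (cases "i \<in> {1..n}")
        case True then show ?thesis using sr by simp
      next
        case False
        have "(s ^^ r) i = i" by (rule permutes_not_in[OF permutes_funpow[OF s] False])
        moreover have "p i = i" by (rule permutes_not_in[OF pS False])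
        ultimately show ?thesis by simp
      qed
    qed
    have e2: "(\<lambda>i. cycle_prod G f s i r) = F"
    proof
      fix i show "cycle_prod G f s i r = F i"
      proof (cases "i \<in> {1..n}")
        case True then show ?thesis using fF by simp
      next
        case False
        have fixi: "(inv_into UNIV s ^^ m) i = i" for m
        proof (induction m)
          case (Suc m) then show ?case using permutes_not_in[OF permutes_inv[OF s] False] by simp
        qed simp
        have "cycle_prod G f s i m = \<one>\<^bsub>G\<^esub>" for m
        proof (induction m)
          case (Suc m) then show ?case using fixi f1 False by simp
        qed simp
        then show ?thesis using F1[OF False] by simp
      qed
    qed
    have "wr_pow G (f, s) r = g" using wr_pow_formula[OF sbij] e1 e2 g by simp
    then show "wr_is_rth_power G n r g" unfolding wr_is_rth_power_def using hc by blast
  qed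
qed


end
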